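(* Let $d\ge2$, $\alpha\in(0,\infty)^d$, $j\in\{1,\dots,d\}$ and let $e_j\in\Delta_{(d-1)}$ be the $j$-th standard basis vector. Then for every $n\ge0$ and $y\in\Delta_{(d-1)}$, $$Q^{\alpha}_n(y,e_j)=Q^{(\alpha_j,|\alpha|-\alpha_j)}_n(y_j,1).$$
   Context: $\Delta_{(d-1)}=\{x\in[0,1]^d:\sum_ix_i=1\}$, $|\alpha|=\sum_i\alpha_i$. $D_\alpha$ is the Dirichlet distribution on $\Delta_{(d-1)}$ with density proportional to $\prod_i x_i^{\alpha_i-1}$. The Jacobi kernel $Q^\alpha_n(x,y)=\sum_kP_k(x)P_k(y)$ where $(P_k)$ is any $L^2(D_\alpha)$-orthonormal basis of the space of polynomials of degree $\le n$ on $\Delta_{(d-1)}$ orthogonal to all polynomials of degree $<n$. For $d=2$ and $a,b>0$, $Q^{(a,b)}_n(u,v)$, $u,v\in[0,1]$, denotes this kernel for $D_{(a,b)}$ written as a function of the first coordinate, i.e. the kernel for the Beta$(a,b)$ distribution with density proportional to $u^{a-1}(1-u)^{b-1}$ on $[0,1]$. *)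

theory Defs
  imports "HOL-Analysis.Analysis"
begin

text \<open>Points of R^d are represented as functions nat => real; only the
coordinates 0..d-1 are meaningful (the simplex forces the others to be 0).\<close>

definition std_simplex :: "nat \<Rightarrow> (nat \<Rightarrow> real) set" where
  "std_simplex d = {x. (\<forall>i<d. 0 \<le> x i \<and> x i \<le> 1) \<and> (\<forall>i\<ge>d. x i = 0) \<and> (\<Sum>i<d. x i) = 1}"

definition basis_pt :: "nat \<Rightarrow> nat \<Rightarrow> real" where
  "basis_pt j = (\<lambda>i. if i = j then 1 else 0)"

definition simplex_pt :: "nat \<Rightarrow> (nat \<Rightarrow> real) \<Rightarrow> (nat \<Rightarrow> real)" where
  "simplex_pt d z = (\<lambda>i. if i < d - 1 then z i else if i = d - 1 then 1 - (\<Sum>k<d - 1. z k) else 0)"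

definition simplex_region :: "nat \<Rightarrow> (nat \<Rightarrow> real) set" where
  "simplex_region d = {z. (\<forall>i<d - 1. 0 \<le> z i) \<and> (\<Sum>i<d - 1. z i) \<le> 1}"

text \<open>Unnormalised Dirichlet density (w.r.t. Lebesgue measure in the first d-1 coordinates).\<close>
definition dir_weight :: "nat \<Rightarrow> (nat \<Rightarrow> real) \<Rightarrow> (nat \<Rightarrow> real) \<Rightarrow> real" where
  "dir_weight d \<alpha> z = indicator (simplex_region d) z * (\<Prod>i<d. simplex_pt d z i powr (\<alpha> i - 1))"

definition leb_coords :: "nat \<Rightarrow> (nat \<Rightarrow> real) measure" where
  "leb_coords d = Pi\<^sub>M {..<d - 1} (\<lambda>_. lborel)"

definition dir_expect :: "nat \<Rightarrow> (nat \<Rightarrow> real) \<Rightarrow> ((nat \<Rightarrow> real) \<Rightarrow> real) \<Rightarrow> real" where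
  "dir_expect d \<alpha> f =
     (\<integral>z. f (simplex_pt d z) * dir_weight d \<alpha> z \<partial>leb_coords d) /
     (\<integral>z. dir_weight d \<alpha> z \<partial>leb_coords d)"

definition dir_inner :: "nat \<Rightarrow> (nat \<Rightarrow> real) \<Rightarrow> ((nat \<Rightarrow> real) \<Rightarrow> real) \<Rightarrow> ((nat \<Rightarrow> real) \<Rightarrow> real) \<Rightarrow> real" where
  "dir_inner d \<alpha> f g = dir_expect d \<alpha> (\<lambda>x. f x * g x)"

definition exps :: "nat \<Rightarrow> nat \<Rightarrow> (nat \<Rightarrow> nat) set" where
  "exps d n = {k. (\<forall>i\<ge>d. k i = 0) \<and> (\<Sum>i<d. k i) \<le> n}"

definition poly_deg_le :: "nat \<Rightarrow> nat \<Rightarrow> ((nat \<Rightarrow> real) \<Rightarrow> real) \<Rightarrow> bool" where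
  "poly_deg_le d n p \<longleftrightarrow>
     (\<exists>c :: (nat \<Rightarrow> nat) \<Rightarrow> real. \<forall>x. p x = (\<Sum>k\<in>exps d n. c k * (\<Prod>i<d. x i ^ k i)))"

definition orth_space :: "nat \<Rightarrow> (nat \<Rightarrow> real) \<Rightarrow> nat \<Rightarrow> ((nat \<Rightarrow> real) \<Rightarrow> real) set" where
  "orth_space d \<alpha> n =
     {p. poly_deg_le d n p \<and> (\<forall>m<n. \<forall>q. poly_deg_le d m q \<longrightarrow> dir_inner d \<alpha> p q = 0)}"

definition is_onb :: "nat \<Rightarrow> (nat \<Rightarrow> real) \<Rightarrow> nat \<Rightarrow> ((nat \<Rightarrow> real) \<Rightarrow> real) list \<Rightarrow> bool" where
  "is_onb d \<alpha> n Ps \<longleftrightarrow>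
     set Ps \<subseteq> orth_space d \<alpha> n \<and>
     (\<forall>i<length Ps. \<forall>j<length Ps. dir_inner d \<alpha> (Ps ! i) (Ps ! j) = (if i = j then 1 else 0)) \<and>
     (\<forall>p\<in>orth_space d \<alpha> n. \<exists>c. \<forall>x\<in>std_simplex d. p x = (\<Sum>i<length Ps. c i * (Ps ! i) x))"

definition jacobi_kernel :: "nat \<Rightarrow> (nat \<Rightarrow> real) \<Rightarrow> nat \<Rightarrow> (nat \<Rightarrow> real) \<Rightarrow> (nat \<Rightarrow> real) \<Rightarrow> real" where
  "jacobi_kernel d \<alpha> n x y = (let Ps = (SOME Ps. is_onb d \<alpha> n Ps) in (\<Sum>P\<leftarrow>Ps. P x * P y))"

text \<open>The d = 2 kernel for Beta(a,b) written as a function of the first coordinate.\<close>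
definition pt2 :: "real \<Rightarrow> nat \<Rightarrow> real" where
  "pt2 u = (\<lambda>i. if i = 0 then u else if i = 1 then 1 - u else 0)"

definition jacobi_kernel_1 :: "real \<Rightarrow> real \<Rightarrow> nat \<Rightarrow> real \<Rightarrow> real \<Rightarrow> real" where
  "jacobi_kernel_1 a b n u v = jacobi_kernel 2 (\<lambda>i. if i = 0 then a else b) n (pt2 u) (pt2 v)"

end

theory Submission
  imports Defs "HOL-Computational_Algebra.Polynomial"
begin

definition dirf :: "nat \<Rightarrow> (nat \<Rightarrow> real) \<Rightarrow> real \<Rightarrow> real \<Rightarrow> (nat \<Rightarrow> real) \<Rightarrow> real" where
  "dirf N \<beta> c s z = (if (\<forall>i<N. 0 \<le> z i) \<and> (\<Sum>i<N. z i) \<le> s then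
      (\<Prod>i<N. z i powr (\<beta> i - 1)) * (s - (\<Sum>i<N. z i)) powr (c - 1) else 0)"

lemma dirf_nonneg: "dirf N \<beta> c s z \<ge> 0"
  unfolding dirf_def by (auto intro!: prod_nonneg mult_nonneg_nonneg)

lemma dirf_meas[measurable]: "{..<N} \<subseteq> I \<Longrightarrow> dirf N \<beta> c s \<in> borel_measurable (Pi\<^sub>M I (\<lambda>_. lborel))"
proof -
  assume I: "{..<N} \<subseteq> I"
  have c[measurable]: "i < N \<Longrightarrow> (\<lambda>z. z i) \<in> borel_measurable (Pi\<^sub>M I (\<lambda>_. lborel))" for i
    using I measurable_component_singleton[of i I "\<lambda>_. lborel"] by auto
  have s[measurable]: "(\<lambda>z. \<Sum>i<N. z i) \<in> borel_measurable (Pi\<^sub>M I (\<lambda>_. lborel))"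
    by (intro borel_measurable_sum) (auto)
  have p[measurable]: "(\<lambda>z. \<Prod>i<N. z i powr (\<beta> i - 1)) \<in> borel_measurable (Pi\<^sub>M I (\<lambda>_. lborel))"
    by (intro borel_measurable_prod powr_real_measurable) auto
  have q[measurable]: "(\<lambda>z. (s - (\<Sum>i<N. z i)) powr (c - 1)) \<in> borel_measurable (Pi\<^sub>M I (\<lambda>_. lborel))"
    by (intro powr_real_measurable borel_measurable_diff) auto
  have A: "{z \<in> space (Pi\<^sub>M I (\<lambda>_. lborel)). (\<forall>i<N. 0 \<le> z i) \<and> (\<Sum>i<N. z i) \<le> s} \<in> sets (Pi\<^sub>M I (\<lambda>_. lborel))"
    by measurable
  show ?thesis unfolding dirf_def
    by (intro measurable_If[OF _ _ A] borel_measurable_times p q) auto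
qed

lemma beta_scaled:
  fixes a b s :: real
  assumes a: "a > 0" and b: "b > 0" and s: "s > 0"
  shows "(\<integral>\<^sup>+y. ennreal (indicator {0..s} y * (y powr (a-1) * (s-y) powr (b-1))) \<partial>lborel)
         = ennreal (s powr (a+b-1) * Beta a b)"
proof -
  have I: "(\<integral>\<^sup>+t. ennreal (indicator {0..1} t * (t powr (a-1) * (1-t) powr (b-1))) \<partial>lborel) = ennreal (Beta a b)"
    using nn_integral_has_integral_lebesgue[OF _ has_integral_Beta_real[OF a b]] by auto
  have "(\<integral>\<^sup>+y. ennreal (indicator {0..s} y * (y powr (a-1) * (s-y) powr (b-1))) \<partial>lborel)
      = ennreal \<bar>s\<bar> * (\<integral>\<^sup>+t. ennreal (indicator {0..s} (0 + s*t) * ((0+s*t) powr (a-1) * (s-(0+s*t)) powr (b-1))) \<partial>lborel)"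
    by (rule nn_integral_real_affine) (use s in auto)
  also have "\<dots> = ennreal s * (\<integral>\<^sup>+t. ennreal (s powr (a+b-2)) * ennreal (indicator {0..1} t * (t powr (a-1) * (1-t) powr (b-1))) \<partial>lborel)"
  proof -
    have "ennreal (indicator {0..s} (0 + s*t) * ((0+s*t) powr (a-1) * (s-(0+s*t)) powr (b-1)))
        = ennreal (s powr (a+b-2)) * ennreal (indicator {0..1} t * (t powr (a-1) * (1-t) powr (b-1)))" for t
    proof (cases "t \<in> {0..1}")
      case True
      have "s - s*t = s * (1-t)" by (simp add: algebra_simps)
      then have "(s*t) powr (a-1) * (s-s*t) powr (b-1) = (s powr (a-1) * s powr (b-1)) * (t powr (a-1) * (1-t) powr (b-1))"
        using True s by (simp add: powr_mult)
      also have "s powr (a-1) * s powr (b-1) = s powr (a+b-2)" by (simp add: powr_add[symmetric])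
      finally have "(s*t) powr (a-1) * (s-s*t) powr (b-1) = s powr (a+b-2) * (t powr (a-1) * (1-t) powr (b-1))" .
      moreover have "0 + s*t \<in> {0..s}" using True s by (auto simp: mult_le_cancel_left1)
      ultimately show ?thesis using True s by (simp add: ennreal_mult'[symmetric])
    next
      case False
      then have "0 + s*t \<notin> {0..s}" using s by (auto simp: zero_le_mult_iff mult_le_cancel_left1)
      then show ?thesis using False by simp
    qed
    then show ?thesis using s by simp
  qed
  also have "\<dots> = ennreal s * ennreal (s powr (a+b-2)) * ennreal (Beta a b)"
    by (subst nn_integral_cmult) (auto simp: I mult.assoc)
  also have "\<dots> = ennreal (s powr (a+b-1) * Beta a b)"
  proof -
    have "s * s powr (a+b-2) = s powr (a+b-1)" using s
      by (simp add: powr_add[symmetric] powr_mult_base)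
    moreover have "Beta a b \<ge> 0" using a b by (simp add: Beta_def)
    ultimately show ?thesis using s by (simp add: ennreal_mult'[symmetric])
  qed
  finally show ?thesis .
qed

lemma dirf_insert:
  "dirf (Suc N) \<beta> c s (x(N:=y)) = (if 0 \<le> y then y powr (\<beta> N - 1) * dirf N \<beta> c (s - y) x else 0)"
proof -
  have e1: "(\<forall>i<Suc N. 0 \<le> (x(N:=y)) i) \<longleftrightarrow> (\<forall>i<N. 0 \<le> x i) \<and> 0 \<le> y"
    by (auto simp: less_Suc_eq)
  have e2: "(\<Sum>i<Suc N. (x(N:=y)) i) = (\<Sum>i<N. x i) + y" by simp
  have e3: "(\<Prod>i<Suc N. (x(N:=y)) i powr (\<beta> i - 1)) = (\<Prod>i<N. x i powr (\<beta> i - 1)) * y powr (\<beta> N - 1)"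
    by simp
  show ?thesis unfolding dirf_def e1 e2 e3
    by (auto simp: algebra_simps)
qed

lemma dir_integral:
  assumes "\<forall>i<N. \<beta> i > 0" "c > 0" "s > 0"
  shows "(\<integral>\<^sup>+z. ennreal (dirf N \<beta> c s z) \<partial>Pi\<^sub>M {..<N} (\<lambda>_. lborel))
     = ennreal (s powr ((\<Sum>i<N. \<beta> i) + c - 1) * (\<Prod>i<N. Gamma (\<beta> i)) * Gamma c / Gamma ((\<Sum>i<N. \<beta> i) + c))"
  using assms
proof (induction N arbitrary: s)
  case 0
  interpret product_sigma_finite "\<lambda>_::nat. lborel::real measure" by standard
  have "Gamma c \<noteq> 0" using 0 by (simp add: Gamma_real_pos less_imp_neq[symmetric]) 
  then show ?case using 0
    by (simp add: PiM_empty dirf_def)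
next
  case (Suc N)
  interpret product_sigma_finite "\<lambda>_::nat. lborel::real measure" by standard
  define B where "B = (\<Sum>i<N. \<beta> i) + c"
  define G where "G = (\<Prod>i<N. Gamma (\<beta> i)) * Gamma c / Gamma B"
  have Bpos: "B > 0" unfolding B_def using Suc.prems by (intro add_nonneg_pos sum_nonneg) (auto simp: less_imp_le)
  have bN: "\<beta> N > 0" using Suc.prems by auto
  have Gnn: "G \<ge> 0" unfolding G_def using Suc.prems Bpos
    by (intro divide_nonneg_pos mult_nonneg_nonneg prod_nonneg) (auto intro: less_imp_le Gamma_real_pos)
  have IH: "(\<integral>\<^sup>+z. ennreal (dirf N \<beta> c t z) \<partial>Pi\<^sub>M {..<N} (\<lambda>_. lborel)) = ennreal (t powr (B - 1) * G)"
    if "t > 0" for t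
    using Suc.IH[of t] Suc.prems that unfolding B_def G_def by (simp add: mult.assoc)
  have zero: "dirf N \<beta> c t z = 0" if "t < 0" "\<forall>i<N. 0 \<le> z i" for t z
  proof -
    have "(\<Sum>i<N. z i) \<ge> 0" using that by (intro sum_nonneg) auto
    then show ?thesis using that unfolding dirf_def by auto
  qed
  have "(\<integral>\<^sup>+z. ennreal (dirf (Suc N) \<beta> c s z) \<partial>Pi\<^sub>M {..<Suc N} (\<lambda>_. lborel))
      = (\<integral>\<^sup>+y. (\<integral>\<^sup>+x. ennreal (dirf (Suc N) \<beta> c s (x(N:=y))) \<partial>Pi\<^sub>M {..<N} (\<lambda>_. lborel)) \<partial>lborel)"
    unfolding lessThan_Suc
    by (subst product_nn_integral_insert_rev) (auto intro!: measurable_compose[OF dirf_meas[of "Suc N"] measurable_ennreal])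
  also have "\<dots> = (\<integral>\<^sup>+y. ennreal (indicator {0..s} y * (y powr (\<beta> N - 1) * (s-y) powr (B+0-1))) * ennreal G \<partial>lborel)"
  proof (rule nn_integral_cong_AE)
    have "AE y in lborel. y \<noteq> s" by (rule AE_lborel_singleton)
    then show "AE y in lborel. (\<integral>\<^sup>+x. ennreal (dirf (Suc N) \<beta> c s (x(N:=y))) \<partial>Pi\<^sub>M {..<N} (\<lambda>_. lborel))
       = ennreal (indicator {0..s} y * (y powr (\<beta> N - 1) * (s-y) powr (B+0-1))) * ennreal G"
    proof eventually_elim
      case (elim y)
      show ?case
      proof (cases "0 \<le> y")
        case False
        then show ?thesis by (simp add: dirf_insert)
      next
        case True
        have "(\<integral>\<^sup>+x. ennreal (dirf (Suc N) \<beta> c s (x(N:=y))) \<partial>Pi\<^sub>M {..<N} (\<lambda>_. lborel))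
           = (\<integral>\<^sup>+x. ennreal (y powr (\<beta> N - 1)) * ennreal (dirf N \<beta> c (s - y) x) \<partial>Pi\<^sub>M {..<N} (\<lambda>_. lborel))"
          using True by (intro nn_integral_cong) (simp add: dirf_insert ennreal_mult' dirf_nonneg)
        also have "\<dots> = ennreal (y powr (\<beta> N - 1)) * (\<integral>\<^sup>+x. ennreal (dirf N \<beta> c (s - y) x) \<partial>Pi\<^sub>M {..<N} (\<lambda>_. lborel))"
          by (rule nn_integral_cmult) auto
        finally have eq: "(\<integral>\<^sup>+x. ennreal (dirf (Suc N) \<beta> c s (x(N:=y))) \<partial>Pi\<^sub>M {..<N} (\<lambda>_. lborel))
           = ennreal (y powr (\<beta> N - 1)) * (\<integral>\<^sup>+x. ennreal (dirf N \<beta> c (s - y) x) \<partial>Pi\<^sub>M {..<N} (\<lambda>_. lborel))" .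
        show ?thesis
        proof (cases "y < s")
          case True
          then show ?thesis using \<open>0 \<le> y\<close> Gnn unfolding eq
            by (subst IH) (auto simp: ennreal_mult'[symmetric] mult.assoc)
        next
          case False
          with elim have "y > s" by auto
          have "(\<integral>\<^sup>+x. ennreal (dirf N \<beta> c (s - y) x) \<partial>Pi\<^sub>M {..<N} (\<lambda>_. lborel)) = 0"
          proof -
            have "dirf N \<beta> c (s - y) x = 0" for x
            proof (cases "\<forall>i<N. 0 \<le> x i")
              case True then show ?thesis using zero[of "s - y" x] \<open>y > s\<close> by auto
            next
              case False then show ?thesis unfolding dirf_def by auto
            qed
            then show ?thesis by simp
          qed
          then show ?thesis using \<open>y > s\<close> unfolding eq by simp
        qed
      qed
    qed
  qed
  also have "\<dots> = (\<integral>\<^sup>+y. ennreal (indicator {0..s} y * (y powr (\<beta> N - 1) * (s-y) powr (B-1))) \<partial>lborel) * ennreal G"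
    by (subst nn_integral_multc) auto
  also have "\<dots> = ennreal (s powr (\<beta> N + B - 1) * Beta (\<beta> N) B) * ennreal G"
    by (subst beta_scaled[OF bN Bpos Suc.prems(3)]) simp
  also have "\<dots> = ennreal (s powr ((\<Sum>i<Suc N. \<beta> i) + c - 1) * (\<Prod>i<Suc N. Gamma (\<beta> i)) * Gamma c / Gamma ((\<Sum>i<Suc N. \<beta> i) + c))"
  proof -
    have "Beta (\<beta> N) B \<ge> 0" using bN Bpos by (simp add: Beta_def)
    moreover have "Gamma B \<noteq> 0" using Bpos by (simp add: Gamma_real_pos less_imp_neq[symmetric])
    moreover have sumeq: "(\<Sum>i<Suc N. \<beta> i) + c = \<beta> N + B" unfolding B_def by simp
    ultimately have r: "s powr (\<beta> N + B - 1) * Beta (\<beta> N) B * G = s powr ((\<Sum>i<Suc N. \<beta> i) + c - 1) * (\<Prod>i<Suc N. Gamma (\<beta> i)) * Gamma c / Gamma ((\<Sum>i<Suc N. \<beta> i) + c)"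
      unfolding G_def Beta_def sumeq by (simp add: field_simps)
    have "ennreal (s powr (\<beta> N + B - 1) * Beta (\<beta> N) B) * ennreal G = ennreal (s powr (\<beta> N + B - 1) * Beta (\<beta> N) B * G)"
      using Gnn by (simp add: ennreal_mult'')
    then show ?thesis using r by simp
  qed
  finally show ?case .
qed

definition xmono :: "nat \<Rightarrow> (nat \<Rightarrow> nat) \<Rightarrow> (nat \<Rightarrow> real) \<Rightarrow> real" where
  "xmono d k x = (\<Prod>i<d. x i ^ k i)"

definition Dm :: "nat \<Rightarrow> (nat \<Rightarrow> real) \<Rightarrow> (nat \<Rightarrow> nat) \<Rightarrow> real" where
  "Dm d \<alpha> k = (\<Prod>i<d. Gamma (\<alpha> i + real (k i))) / Gamma (\<Sum>i<d. (\<alpha> i + real (k i)))"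

definition Vf :: "nat \<Rightarrow> ((nat \<Rightarrow> real) \<Rightarrow> real) \<Rightarrow> bool" where
  "Vf d f \<longleftrightarrow> (\<lambda>z. f (simplex_pt d z)) \<in> borel_measurable (leb_coords d) \<and> (\<exists>B. \<forall>x\<in>std_simplex d. \<bar>f x\<bar> \<le> B)"

lemma sp_in_simplex:
  assumes "d \<ge> 1" "z \<in> simplex_region d"
  shows "simplex_pt d z \<in> std_simplex d"
proof -
  obtain N where d: "d = Suc N" using assms(1) by (cases d) auto
  have nn: "\<forall>i<N. 0 \<le> z i" and s1: "(\<Sum>i<N. z i) \<le> 1" using assms(2) unfolding simplex_region_def d by auto
  have le: "z i \<le> 1" if "i < N" for i
  proof -
    have "z i \<le> (\<Sum>i<N. z i)" using that nn by (intro member_le_sum) auto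
    then show ?thesis using s1 by simp
  qed
  have s0: "0 \<le> (\<Sum>i<N. z i)" using nn by (intro sum_nonneg) auto
  have "(\<Sum>i<Suc N. simplex_pt (Suc N) z i) = (\<Sum>i<N. z i) + (1 - (\<Sum>i<N. z i))"
    unfolding simplex_pt_def by simp
  then show ?thesis unfolding std_simplex_def d using nn le s1 s0
    by (auto simp: simplex_pt_def less_Suc_eq)
qed

lemma weight_nonneg: "dir_weight d \<alpha> z \<ge> 0"
  unfolding dir_weight_def by (intro mult_nonneg_nonneg prod_nonneg) auto

lemma weight_out: "z \<notin> simplex_region d \<Longrightarrow> dir_weight d \<alpha> z = 0"
  unfolding dir_weight_def by simp

lemma pow_powr: "0 \<le> (x::real) \<Longrightarrow> x ^ k * x powr (a - 1) = x powr (a + real k - 1)"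
proof (cases "x = 0")
  case False
  assume "0 \<le> x"
  then have "x > 0" using False by auto
  then show ?thesis by (simp add: powr_realpow[symmetric] powr_add[symmetric] algebra_simps)
qed simp

lemma mono_weight:
  assumes "d \<ge> 1"
  shows "xmono d k (simplex_pt d z) * dir_weight d \<alpha> z
     = dirf (d-1) (\<lambda>i. \<alpha> i + real (k i)) (\<alpha> (d-1) + real (k (d-1))) 1 z"
proof -
  obtain N where d: "d = Suc N" using assms(1) by (cases d) auto
  show ?thesis
  proof (cases "z \<in> simplex_region d")
    case False
    then show ?thesis unfolding dir_weight_def dirf_def simplex_region_def d by auto
  next
    case True
    then have nn: "\<forall>i<N. 0 \<le> z i" and s1: "(\<Sum>i<N. z i) \<le> 1" unfolding simplex_region_def d by auto
    have spnn: "simplex_pt d z i \<ge> 0" if "i < d" for i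
      using sp_in_simplex[OF assms True] that unfolding std_simplex_def by auto
    have "xmono d k (simplex_pt d z) * dir_weight d \<alpha> z
        = (\<Prod>i<d. simplex_pt d z i ^ k i * simplex_pt d z i powr (\<alpha> i - 1))"
      using True unfolding xmono_def dir_weight_def by (simp add: prod.distrib)
    also have "\<dots> = (\<Prod>i<d. simplex_pt d z i powr (\<alpha> i + real (k i) - 1))"
      using spnn by (intro prod.cong refl pow_powr) auto
    also have "\<dots> = (\<Prod>i<N. z i powr (\<alpha> i + real (k i) - 1)) * (1 - (\<Sum>i<N. z i)) powr (\<alpha> N + real (k N) - 1)"
      unfolding d by (simp add: simplex_pt_def)
    also have "\<dots> = dirf (d-1) (\<lambda>i. \<alpha> i + real (k i)) (\<alpha> (d-1) + real (k (d-1))) 1 z"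
      using nn s1 unfolding dirf_def d by simp
    finally show ?thesis .
  qed
qed

lemma Dm_pos:
  assumes "\<forall>i<d. \<alpha> i > 0" "d \<ge> 1"
  shows "Dm d \<alpha> k > 0"
proof -
  have "(\<Sum>i<d. (\<alpha> i + real (k i))) > 0"
    using assms by (intro sum_pos) (auto simp: add_pos_nonneg lessThan_empty_iff)
  then show ?thesis unfolding Dm_def using assms
    by (intro divide_pos_pos prod_pos Gamma_real_pos) (auto simp: add_pos_nonneg)
qed

lemma moment_nn:
  assumes "\<forall>i<d. \<alpha> i > 0" "d \<ge> 1"
  shows "(\<integral>\<^sup>+z. ennreal (xmono d k (simplex_pt d z) * dir_weight d \<alpha> z) \<partial>leb_coords d) = ennreal (Dm d \<alpha> k)"
proof -
  obtain N where d: "d = Suc N" using assms(2) by (cases d) auto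
  have "(\<integral>\<^sup>+z. ennreal (xmono d k (simplex_pt d z) * dir_weight d \<alpha> z) \<partial>leb_coords d)
      = (\<integral>\<^sup>+z. ennreal (dirf N (\<lambda>i. \<alpha> i + real (k i)) (\<alpha> N + real (k N)) 1 z) \<partial>Pi\<^sub>M {..<N} (\<lambda>_. lborel))"
    unfolding leb_coords_def mono_weight[OF assms(2)] unfolding d by simp
  also have "\<dots> = ennreal (Dm d \<alpha> k)"
    by (subst dir_integral) (use assms in \<open>auto simp: d Dm_def add_pos_nonneg add.commute\<close>)
  finally show ?thesis .
qed

lemma sp_meas[measurable]: "(\<lambda>z. simplex_pt d z i) \<in> borel_measurable (leb_coords d)"
proof -
  have c: "k < d - 1 \<Longrightarrow> (\<lambda>z. z k) \<in> borel_measurable (leb_coords d)" for k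
    unfolding leb_coords_def using measurable_component_singleton[of k "{..<d-1}" "\<lambda>_. lborel"] by auto
  have s: "(\<lambda>z. \<Sum>k<d-1. z k) \<in> borel_measurable (leb_coords d)"
    using c by (intro borel_measurable_sum) auto
  show ?thesis
  proof (cases "i < d - 1")
    case True then show ?thesis unfolding simplex_pt_def using c by simp
  next
    case False then show ?thesis unfolding simplex_pt_def using s by (cases "i = d - 1") auto
  qed
qed

lemma xmono_sp_meas[measurable]: "(\<lambda>z. xmono d k (simplex_pt d z)) \<in> borel_measurable (leb_coords d)"
  unfolding xmono_def by (intro borel_measurable_prod borel_measurable_power sp_meas)

lemma xmono_zero[simp]: "xmono d (\<lambda>_. 0) x = 1"
  unfolding xmono_def by simp

lemma weight_meas[measurable]:
  assumes "d \<ge> 1" shows "dir_weight d \<alpha> \<in> borel_measurable (leb_coords d)"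
proof -
  have "dir_weight d \<alpha> = (\<lambda>z. dirf (d-1) (\<lambda>i. \<alpha> i + real 0) (\<alpha> (d-1) + real 0) 1 z)"
    using mono_weight[OF assms, of "\<lambda>_. 0"] by (auto simp: fun_eq_iff)
  then show ?thesis unfolding leb_coords_def by (simp add: dirf_meas)
qed

lemma moment_int:
  assumes "\<forall>i<d. \<alpha> i > 0" "d \<ge> 1"
  shows "integrable (leb_coords d) (\<lambda>z. xmono d k (simplex_pt d z) * dir_weight d \<alpha> z)"
    and "(\<integral>z. xmono d k (simplex_pt d z) * dir_weight d \<alpha> z \<partial>leb_coords d) = Dm d \<alpha> k"
proof -
  have nn: "0 \<le> xmono d k (simplex_pt d z) * dir_weight d \<alpha> z" for z
    unfolding mono_weight[OF assms(2)] by (rule dirf_nonneg)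
  have m: "(\<lambda>z. xmono d k (simplex_pt d z) * dir_weight d \<alpha> z) \<in> borel_measurable (leb_coords d)"
    using assms by measurable
  show "integrable (leb_coords d) (\<lambda>z. xmono d k (simplex_pt d z) * dir_weight d \<alpha> z)"
    using moment_nn[OF assms] nn m by (intro integrableI_nonneg) auto
  show "(\<integral>z. xmono d k (simplex_pt d z) * dir_weight d \<alpha> z \<partial>leb_coords d) = Dm d \<alpha> k"
    using moment_nn[OF assms] nn m Dm_pos[OF assms] by (subst integral_eq_nn_integral) auto
qed

lemma weight_int:
  assumes "\<forall>i<d. \<alpha> i > 0" "d \<ge> 1"
  shows "integrable (leb_coords d) (dir_weight d \<alpha>)"
    and "(\<integral>z. dir_weight d \<alpha> z \<partial>leb_coords d) = Dm d \<alpha> (\<lambda>_. 0)"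
  using moment_int[OF assms, of "\<lambda>_. 0"] by auto

lemma Vf_integrable:
  assumes "\<forall>i<d. \<alpha> i > 0" "d \<ge> 1" "Vf d f"
  shows "integrable (leb_coords d) (\<lambda>z. f (simplex_pt d z) * dir_weight d \<alpha> z)"
proof -
  obtain B where B: "\<forall>x\<in>std_simplex d. \<bar>f x\<bar> \<le> B" and m: "(\<lambda>z. f (simplex_pt d z)) \<in> borel_measurable (leb_coords d)"
    using assms(3) unfolding Vf_def by auto
  show ?thesis
  proof (rule Bochner_Integration.integrable_bound)
    show "integrable (leb_coords d) (\<lambda>z. B * dir_weight d \<alpha> z)"
      using weight_int[OF assms(1,2)] by auto
    show "(\<lambda>z. f (simplex_pt d z) * dir_weight d \<alpha> z) \<in> borel_measurable (leb_coords d)"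
      using m weight_meas[OF assms(2)] by measurable
    show "AE z in leb_coords d. norm (f (simplex_pt d z) * dir_weight d \<alpha> z) \<le> norm (B * dir_weight d \<alpha> z)"
    proof (rule AE_I2)
      fix z
      show "norm (f (simplex_pt d z) * dir_weight d \<alpha> z) \<le> norm (B * dir_weight d \<alpha> z)"
      proof (cases "z \<in> simplex_region d")
        case True
        then have "\<bar>f (simplex_pt d z)\<bar> \<le> B" using B sp_in_simplex[OF assms(2)] by auto
        then show ?thesis using weight_nonneg[of d \<alpha> z]
          by (auto simp: abs_mult intro!: mult_right_mono)
      next
        case False then show ?thesis by (simp add: weight_out)
      qed
    qed
  qed
qed

lemma E_eq:
  assumes "\<forall>i<d. \<alpha> i > 0" "d \<ge> 1"
  shows "dir_expect d \<alpha> f = (\<integral>z. f (simplex_pt d z) * dir_weight d \<alpha> z \<partial>leb_coords d) / Dm d \<alpha> (\<lambda>_. 0)"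
  unfolding dir_expect_def weight_int[OF assms] ..

lemma E_cong:
  assumes "d \<ge> 1" "\<forall>x\<in>std_simplex d. f x = g x"
  shows "dir_expect d \<alpha> f = dir_expect d \<alpha> g"
proof -
  have "f (simplex_pt d z) * dir_weight d \<alpha> z = g (simplex_pt d z) * dir_weight d \<alpha> z" for z
    by (cases "z \<in> simplex_region d") (use assms sp_in_simplex[OF assms(1)] in \<open>auto simp: weight_out\<close>)
  then have "(\<lambda>z. f (simplex_pt d z) * dir_weight d \<alpha> z) = (\<lambda>z. g (simplex_pt d z) * dir_weight d \<alpha> z)" by (rule ext)
  then show ?thesis unfolding dir_expect_def by simp
qed

lemma E_xmono:
  assumes "\<forall>i<d. \<alpha> i > 0" "d \<ge> 1"
  shows "dir_expect d \<alpha> (xmono d k) = Dm d \<alpha> k / Dm d \<alpha> (\<lambda>_. 0)"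
  unfolding E_eq[OF assms] moment_int[OF assms] ..

lemma Vf_add: "Vf d f \<Longrightarrow> Vf d g \<Longrightarrow> Vf d (\<lambda>x. f x + g x)"
proof -
  assume f: "Vf d f" and g: "Vf d g"
  obtain A where A: "\<forall>x\<in>std_simplex d. \<bar>f x\<bar> \<le> A" using f unfolding Vf_def by auto
  obtain B where B: "\<forall>x\<in>std_simplex d. \<bar>g x\<bar> \<le> B" using g unfolding Vf_def by auto
  have "\<forall>x\<in>std_simplex d. \<bar>f x + g x\<bar> \<le> A + B" using A B by (meson abs_triangle_ineq add_mono order_trans)
  then show ?thesis using f g unfolding Vf_def by auto
qed

lemma Vf_mult: "Vf d f \<Longrightarrow> Vf d g \<Longrightarrow> Vf d (\<lambda>x. f x * g x)"
proof -
  assume f: "Vf d f" and g: "Vf d g"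
  obtain A where A: "\<forall>x\<in>std_simplex d. \<bar>f x\<bar> \<le> A" using f unfolding Vf_def by auto
  obtain B where B: "\<forall>x\<in>std_simplex d. \<bar>g x\<bar> \<le> B" using g unfolding Vf_def by auto
  have "\<forall>x\<in>std_simplex d. \<bar>f x * g x\<bar> \<le> A * B" using A B by (auto simp: abs_mult intro!: mult_mono)
  then show ?thesis using f g unfolding Vf_def by auto
qed

lemma Vf_const: "Vf d (\<lambda>x. c)"
  unfolding Vf_def by auto

lemma Vf_cmult: "Vf d f \<Longrightarrow> Vf d (\<lambda>x. c * f x)"
  using Vf_mult[OF Vf_const] by blast

lemma Vf_diff: "Vf d f \<Longrightarrow> Vf d g \<Longrightarrow> Vf d (\<lambda>x. f x - g x)"
  using Vf_add[of d f "\<lambda>x. (-1) * g x"] Vf_cmult[of d g "-1"] by simp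

lemma Vf_sum: "finite I \<Longrightarrow> (\<And>i. i \<in> I \<Longrightarrow> Vf d (f i)) \<Longrightarrow> Vf d (\<lambda>x. \<Sum>i\<in>I. f i x)"
  by (induction I rule: finite_induct) (auto intro: Vf_add Vf_const)

lemma Vf_xmono: "Vf d (xmono d k)"
proof -
  have "\<forall>x\<in>std_simplex d. \<bar>xmono d k x\<bar> \<le> 1"
    unfolding std_simplex_def xmono_def by (auto simp: abs_prod power_abs intro!: prod_le_1 power_le_one)
  then show ?thesis unfolding Vf_def by auto
qed

lemma E_add:
  assumes "\<forall>i<d. \<alpha> i > 0" "d \<ge> 1" "Vf d f" "Vf d g"
  shows "dir_expect d \<alpha> (\<lambda>x. f x + g x) = dir_expect d \<alpha> f + dir_expect d \<alpha> g"
  unfolding E_eq[OF assms(1,2)] distrib_right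
  by (subst Bochner_Integration.integral_add) (auto intro!: Vf_integrable assms simp: add_divide_distrib)

lemma E_cmult:
  assumes "\<forall>i<d. \<alpha> i > 0" "d \<ge> 1"
  shows "dir_expect d \<alpha> (\<lambda>x. c * f x) = c * dir_expect d \<alpha> f"
  unfolding E_eq[OF assms(1,2)] by (simp add: mult.assoc)

lemma E_sum:
  assumes "\<forall>i<d. \<alpha> i > 0" "d \<ge> 1" "finite I" "\<And>i. i \<in> I \<Longrightarrow> Vf d (f i)"
  shows "dir_expect d \<alpha> (\<lambda>x. \<Sum>i\<in>I. f i x) = (\<Sum>i\<in>I. dir_expect d \<alpha> (f i))"
  using assms(3,4)
proof (induction I rule: finite_induct)
  case empty
  then show ?case unfolding dir_expect_def by simp
next
  case (insert a I)
  then show ?case by (simp add: E_add[OF assms(1,2)] Vf_sum)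
qed

lemma E_nonneg:
  assumes "\<forall>i<d. \<alpha> i > 0" "d \<ge> 1" "\<forall>x\<in>std_simplex d. f x \<ge> 0"
  shows "dir_expect d \<alpha> f \<ge> 0"
proof -
  have "f (simplex_pt d z) * dir_weight d \<alpha> z \<ge> 0" for z
    by (cases "z \<in> simplex_region d") (use assms sp_in_simplex[OF assms(2)] weight_nonneg[of d \<alpha> z] in \<open>auto simp: weight_out\<close>)
  then show ?thesis unfolding E_eq[OF assms(1,2)] using Dm_pos[OF assms(1,2)]
    by (intro divide_nonneg_pos integral_nonneg_AE) auto
qed

lemma finite_exps: "finite (exps d n)"
proof -
  have "exps d n \<subseteq> (\<lambda>f i. if i < d then f i else 0) ` (PiE {..<d} (\<lambda>_. {..n}))"
  proof
    fix k assume k: "k \<in> exps d n"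
    have le: "k i \<le> n" if "i < d" for i
    proof -
      have "k i \<le> (\<Sum>i<d. k i)" using that by (intro member_le_sum) auto
      then show ?thesis using k unfolding exps_def by auto
    qed
    have "k = (\<lambda>i. if i < d then (restrict k {..<d}) i else 0)"
      using k unfolding exps_def by (auto simp: fun_eq_iff)
    moreover have "restrict k {..<d} \<in> PiE {..<d} (\<lambda>_. {..n})" using le by auto
    ultimately show "k \<in> (\<lambda>f i. if i < d then f i else 0) ` (PiE {..<d} (\<lambda>_. {..n}))" by blast
  qed
  then show ?thesis by (rule finite_subset) (auto intro: finite_PiE)
qed

lemma pdl_iff: "poly_deg_le d n p \<longleftrightarrow> (\<exists>c. p = (\<lambda>x. \<Sum>k\<in>exps d n. c k * xmono d k x))"
  unfolding poly_deg_le_def xmono_def by (auto simp: fun_eq_iff)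

lemma pdl_add: "poly_deg_le d n p \<Longrightarrow> poly_deg_le d n q \<Longrightarrow> poly_deg_le d n (\<lambda>x. p x + q x)"
  unfolding pdl_iff
proof (elim exE)
  fix c e assume "p = (\<lambda>x. \<Sum>k\<in>exps d n. c k * xmono d k x)" "q = (\<lambda>x. \<Sum>k\<in>exps d n. e k * xmono d k x)"
  then show "\<exists>c. (\<lambda>x. p x + q x) = (\<lambda>x. \<Sum>k\<in>exps d n. c k * xmono d k x)"
    by (intro exI[of _ "\<lambda>k. c k + e k"]) (simp add: sum.distrib distrib_right)
qed

lemma pdl_cmult: "poly_deg_le d n p \<Longrightarrow> poly_deg_le d n (\<lambda>x. a * p x)"
  unfolding pdl_iff
proof (elim exE)
  fix c assume "p = (\<lambda>x. \<Sum>k\<in>exps d n. c k * xmono d k x)"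
  then show "\<exists>c. (\<lambda>x. a * p x) = (\<lambda>x. \<Sum>k\<in>exps d n. c k * xmono d k x)"
    by (intro exI[of _ "\<lambda>k. a * c k"]) (simp add: sum_distrib_left mult.assoc)
qed

lemma pdl_zero: "poly_deg_le d n (\<lambda>x. 0)"
  unfolding pdl_iff by (intro exI[of _ "\<lambda>k. 0"]) simp

lemma pdl_sum: "finite I \<Longrightarrow> (\<And>i. i \<in> I \<Longrightarrow> poly_deg_le d n (f i)) \<Longrightarrow> poly_deg_le d n (\<lambda>x. \<Sum>i\<in>I. f i x)"
  by (induction I rule: finite_induct) (auto intro: pdl_add pdl_zero)

lemma pdl_xmono: "k \<in> exps d n \<Longrightarrow> poly_deg_le d n (xmono d k)"
  unfolding pdl_iff
proof (intro exI[of _ "\<lambda>k'. if k' = k then 1 else 0"] ext)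
  fix x assume k: "k \<in> exps d n"
  have "(\<Sum>ka\<in>exps d n. (if ka = k then 1 else 0) * xmono d ka x) = (\<Sum>ka\<in>exps d n. (if ka = k then xmono d ka x else 0))"
    by (intro sum.cong) auto
  also have "\<dots> = xmono d k x" using k by (simp add: sum.delta finite_exps)
  finally show "xmono d k x = (\<Sum>ka\<in>exps d n. (if ka = k then 1 else 0) * xmono d ka x)" by simp
qed

lemma pdl_le: "n \<le> m \<Longrightarrow> poly_deg_le d n p \<Longrightarrow> poly_deg_le d m p"
  unfolding pdl_iff
proof (elim exE)
  fix c assume nm: "n \<le> m" and p: "p = (\<lambda>x. \<Sum>k\<in>exps d n. c k * xmono d k x)"
  have sub: "exps d n \<subseteq> exps d m" using nm unfolding exps_def by auto
  have "(\<Sum>k\<in>exps d m. (if k \<in> exps d n then c k else 0) * xmono d k x) = (\<Sum>k\<in>exps d n. c k * xmono d k x)" for x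
    using sub finite_exps by (intro sum.mono_neutral_cong_right) auto
  then show "\<exists>c. p = (\<lambda>x. \<Sum>k\<in>exps d m. c k * xmono d k x)"
    using p by (intro exI[of _ "\<lambda>k. if k \<in> exps d n then c k else 0"]) auto
qed

lemma pdl_Vf: "poly_deg_le d n p \<Longrightarrow> Vf d p"
  unfolding pdl_iff by (auto intro!: Vf_sum Vf_cmult Vf_xmono finite_exps)

lemma xmono_single: "j < d \<Longrightarrow> xmono d (\<lambda>i. if i = j then m else 0) y = y j ^ m"
proof -
  assume j: "j < d"
  have "(\<Prod>i<d. y i ^ (if i = j then m else 0)) = (\<Prod>i\<in>{j}. y i ^ m)"
    using j by (intro prod.mono_neutral_cong_right) auto
  then show ?thesis unfolding xmono_def by simp
qed

lemma pdl_univ: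
  assumes "degree Q \<le> n" "j < d"
  shows "poly_deg_le d n (\<lambda>y. poly Q (y j))"
proof -
  have eq: "(\<lambda>y. poly Q (y j)) = (\<lambda>y. \<Sum>m\<le>degree Q. coeff Q m * xmono d (\<lambda>i. if i = j then m else 0) y)"
    unfolding poly_altdef xmono_single[OF assms(2)] ..
  have "poly_deg_le d n (\<lambda>y. \<Sum>m\<le>degree Q. coeff Q m * xmono d (\<lambda>i. if i = j then m else 0) y)"
  proof (intro pdl_sum pdl_cmult pdl_xmono)
    fix m assume "m \<in> {..degree Q}"
    then have "m \<le> n" using assms by auto
    moreover have "(\<Sum>i<d. (if i = j then m else 0)) = m"
      using assms(2) by (simp add: sum.delta)
    ultimately show "(\<lambda>i. if i = j then m else 0) \<in> exps d n" unfolding exps_def by auto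
  qed auto
  then show ?thesis using eq by simp
qed

definition isQ :: "nat \<Rightarrow> ((nat \<Rightarrow> real) \<Rightarrow> real) \<Rightarrow> real poly \<Rightarrow> bool" where
  "isQ n f Q \<longleftrightarrow> degree Q \<le> n \<and> (\<forall>u. f (pt2 u) = poly Q u)"

lemma pt2_poly:
  assumes "poly_deg_le 2 n P"
  shows "\<exists>Q. isQ n P Q"
proof -
  obtain c where P: "P = (\<lambda>x. \<Sum>k\<in>exps 2 n. c k * xmono 2 k x)" using assms unfolding pdl_iff by auto
  define Q where "Q = (\<Sum>k\<in>exps 2 n. smult (c k) ([:0,1:] ^ k 0 * [:1,-1:] ^ k 1))"
  have deg: "degree Q \<le> n" unfolding Q_def
  proof (rule degree_sum_le[OF finite_exps])
    fix k assume k: "k \<in> exps 2 n"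
    have "degree (smult (c k) ([:0,1:] ^ k 0 * [:1,-1:] ^ k 1)) \<le> degree (([:0::real,1:] ^ k 0 * [:1,-1:] ^ k 1))"
      by (rule degree_smult_le)
    also have "\<dots> \<le> degree ([:0::real,1:] ^ k 0) + degree ([:1::real,-1:] ^ k 1)" by (rule degree_mult_le)
    also have "\<dots> \<le> k 0 + k 1"
      using degree_power_le[of "[:0::real,1:]" "k 0"] degree_power_le[of "[:1::real,-1:]" "k 1"] by simp
    also have "\<dots> \<le> n" using k unfolding exps_def by (simp add: numeral_2_eq_2)
    finally show "degree (smult (c k) ([:0,1:] ^ k 0 * [:1,-1:] ^ k 1)) \<le> n" .
  qed
  have "P (pt2 u) = poly Q u" for u
  proof -
    have "xmono 2 k (pt2 u) = u ^ k 0 * (1 - u) ^ k 1" for k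
      unfolding xmono_def pt2_def by (simp add: numeral_2_eq_2)
    then show ?thesis unfolding P Q_def poly_sum by (simp add: poly_power algebra_simps)
  qed
  then show ?thesis using deg unfolding isQ_def by auto
qed

lemma isQ_add: "isQ n f Q \<Longrightarrow> isQ n g R \<Longrightarrow> isQ n (\<lambda>x. f x + g x) (Q + R)"
  unfolding isQ_def by (auto intro: degree_add_le)

lemma isQ_cmult: "isQ n f Q \<Longrightarrow> isQ n (\<lambda>x. a * f x) (smult a Q)"
  unfolding isQ_def by (auto intro: order_trans[OF degree_smult_le])

lemma isQ_sum: "finite I \<Longrightarrow> (\<And>i. i \<in> I \<Longrightarrow> isQ n (f i) (Q i)) \<Longrightarrow> isQ n (\<lambda>x. \<Sum>i\<in>I. f i x) (\<Sum>i\<in>I. Q i)"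
proof (induction I rule: finite_induct)
  case empty then show ?case unfolding isQ_def by simp
next
  case (insert a I) then show ?case using isQ_add[of n "f a" "Q a"] by simp
qed

lemma pt2_in_simplex: "x \<in> std_simplex 2 \<Longrightarrow> x = pt2 (x 0)"
  unfolding std_simplex_def pt2_def by (auto simp: fun_eq_iff numeral_2_eq_2)

lemma pt2_simplex: "0 \<le> u \<Longrightarrow> u \<le> 1 \<Longrightarrow> pt2 u \<in> std_simplex 2"
  unfolding std_simplex_def pt2_def by (auto simp: numeral_2_eq_2)

lemma sp_cont: "continuous_on UNIV (\<lambda>z::nat\<Rightarrow>real. simplex_pt d z i)"
proof (cases "i < d - 1")
  case True then show ?thesis unfolding simplex_pt_def by simp
next
  case False
  have "continuous_on UNIV (\<lambda>z::nat\<Rightarrow>real. 1 - (\<Sum>k<d-1. z k))"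
    by (intro continuous_intros) simp
  then show ?thesis using False unfolding simplex_pt_def by (cases "i = d - 1") auto
qed

lemma g_cont:
  assumes "poly_deg_le d n p"
  shows "continuous_on UNIV (\<lambda>z::nat\<Rightarrow>real. p (simplex_pt d z))"
proof -
  obtain c where p: "p = (\<lambda>x. \<Sum>k\<in>exps d n. c k * xmono d k x)" using assms unfolding pdl_iff by auto
  show ?thesis unfolding p xmono_def by (intro continuous_intros sp_cont)
qed

lemma sp_dep: "(\<And>i. i < d - 1 \<Longrightarrow> z i = z' i) \<Longrightarrow> simplex_pt d z = simplex_pt d z'"
  unfolding simplex_pt_def by (auto simp: fun_eq_iff)

lemma sp_self: "x \<in> std_simplex d \<Longrightarrow> d \<ge> 1 \<Longrightarrow> simplex_pt d x = x"
proof -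
  assume x: "x \<in> std_simplex d" and d: "d \<ge> 1"
  obtain N where dN: "d = Suc N" using d by (cases d) auto
  have "(\<Sum>i<Suc N. x i) = 1" using x unfolding std_simplex_def dN by auto
  then have "x N = 1 - (\<Sum>i<N. x i)" by simp
  then show ?thesis using x unfolding simplex_pt_def std_simplex_def dN
    by (auto simp: fun_eq_iff not_less)
qed

lemma weight_pos:
  assumes "d \<ge> 1" "\<forall>i<d-1. 0 < z i" "(\<Sum>i<d-1. z i) < 1"
  shows "dir_weight d \<alpha> z > 0"
proof -
  have reg: "z \<in> simplex_region d" using assms unfolding simplex_region_def by (auto simp: less_imp_le)
  have "simplex_pt d z i > 0" if "i < d" for i
    using assms that unfolding simplex_pt_def by auto
  then have "\<forall>i\<in>{..<d}. simplex_pt d z i powr (\<alpha> i - 1) > 0"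
    by (metis lessThan_iff less_irrefl powr_gt_zero)
  then have "0 < (\<Prod>i<d. simplex_pt d z i powr (\<alpha> i - 1))" by (intro prod_pos) blast
  then show ?thesis using reg unfolding dir_weight_def by simp
qed

lemma definite:
  assumes apos: "\<forall>i<d. \<alpha> i > 0" and d2: "d \<ge> 2" and pp: "poly_deg_le d n p"
    and E0: "dir_expect d \<alpha> (\<lambda>x. p x * p x) = 0" and x0: "x0 \<in> std_simplex d"
  shows "p x0 = 0"
proof (rule ccontr)
  assume nz: "p x0 \<noteq> 0"
  have d1: "d \<ge> 1" using d2 by simp
  define N where "N = d - 1"
  define g where "g = (\<lambda>z. p (simplex_pt d z))"
  have gc: "continuous_on UNIV g" unfolding g_def by (rule g_cont[OF pp])
  have gx0: "g x0 \<noteq> 0" unfolding g_def sp_self[OF x0 d1] by (rule nz)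
  define zt where "zt = (\<lambda>t::real. \<lambda>i. (1-t) * x0 i + t / real d)"
  have ztc: "continuous_on UNIV zt" unfolding zt_def using d1 by (intro continuous_intros) auto
  have "continuous_on UNIV (g \<circ> zt)" by (rule continuous_on_compose[OF ztc]) (use gc in \<open>auto intro: continuous_on_subset\<close>)
  then have "continuous (at 0) (g \<circ> zt)" by (simp add: continuous_on_eq_continuous_at comp_def)
  moreover have "(g \<circ> zt) 0 \<noteq> 0" using gx0 unfolding zt_def by simp
  ultimately obtain \<epsilon> where ep: "\<epsilon> > 0" "\<forall>t. dist 0 t < \<epsilon> \<longrightarrow> (g \<circ> zt) t \<noteq> 0"
    using continuous_at_avoid by blast
  define t where "t = min (\<epsilon>/2) (1/2)"
  have t: "0 < t" "t < 1" "dist 0 t < \<epsilon>" using ep unfolding t_def by (auto simp: dist_real_def)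
  define z1 where "z1 = zt t"
  have gz1: "g z1 \<noteq> 0" using ep t unfolding z1_def by auto
  have x0nn: "\<forall>i<d. 0 \<le> x0 i" and x0s: "(\<Sum>i<d. x0 i) = 1" using x0 unfolding std_simplex_def by auto
  have z1pos: "\<forall>i<N. 0 < z1 i"
    unfolding z1_def zt_def using t x0nn d1 unfolding N_def by (auto intro!: add_nonneg_pos)
  have z1sum: "(\<Sum>i<N. z1 i) < 1"
  proof -
    have sN: "(\<Sum>i<N. x0 i) \<le> 1"
    proof -
      have "(\<Sum>i<N. x0 i) \<le> (\<Sum>i<d. x0 i)" unfolding N_def using x0nn by (intro sum_mono2) auto
      then show ?thesis using x0s by simp
    qed
    have "(\<Sum>i<N. z1 i) = (1-t) * (\<Sum>i<N. x0 i) + t * (real N / real d)"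
      unfolding z1_def zt_def by (simp add: sum.distrib sum_distrib_left)
    also have "\<dots> \<le> (1-t) * 1 + t * (real N / real d)"
      using t sN by (intro add_mono mult_left_mono) auto
    also have "\<dots> < 1"
    proof -
      have "real N / real d < 1" unfolding N_def using d1 by (auto simp: field_simps of_nat_diff)
      then have "t * (real N / real d) < t * 1" using t by (intro mult_strict_left_mono) auto
      then show ?thesis by simp
    qed
    finally show ?thesis .
  qed
  define U where "U = {z. g z \<noteq> 0 \<and> (\<forall>i<N. 0 < z i) \<and> (\<Sum>i<N. z i) < 1}"
  have "open U"
  proof -
    have "U = g -` (-{0}) \<inter> (\<Inter>i<N. (\<lambda>z. z i) -` {0<..}) \<inter> (\<lambda>z. \<Sum>i<N. z i) -` {..<1}"
      unfolding U_def by auto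
    moreover have "open (g -` (-{0}))"
      using gc by (intro continuous_open_vimage) (auto simp: continuous_on_eq_continuous_at)
    moreover have "open ((\<lambda>z::nat\<Rightarrow>real. z i) -` {0<..})" for i
    proof -
      have "\<And>x. isCont (\<lambda>z::nat\<Rightarrow>real. z i) x"
        using continuous_on_product_coordinates[of i] continuous_on_eq_continuous_at[of UNIV "\<lambda>z::nat\<Rightarrow>real. z i"]
        by blast
      then show ?thesis by (intro continuous_open_vimage) auto
    qed
    moreover have "open ((\<lambda>z::nat\<Rightarrow>real. \<Sum>i<N. z i) -` {..<1})"
    proof -
      have "continuous_on UNIV (\<lambda>z::nat\<Rightarrow>real. \<Sum>i<N. z i)" by (intro continuous_intros) auto
      then show ?thesis by (intro continuous_open_vimage) (auto simp: continuous_on_eq_continuous_at)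
    qed
    ultimately show ?thesis by (auto intro!: open_Int open_INT)
  qed
  moreover have "z1 \<in> U" unfolding U_def using gz1 z1pos z1sum by auto
  ultimately obtain X where X: "z1 \<in> PiE UNIV X" "\<forall>i. openin euclidean (X i)" "PiE UNIV X \<subseteq> U"
    using product_topology_open_contains_basis[of "\<lambda>i. euclidean" UNIV U z1]
    unfolding open_fun_def by auto
  have "\<forall>i<N. \<exists>e>0. ball (z1 i) e \<subseteq> X i"
  proof (intro allI impI)
    fix i assume "i < N"
    have "z1 i \<in> X i" using X(1) by (rule PiE_mem) simp
    moreover have "open (X i)" using X(2) open_openin by blast
    ultimately show "\<exists>e>0. ball (z1 i) e \<subseteq> X i" using open_contains_ball_eq by blast
  qed
  then obtain e where e: "\<forall>i<N. e i > 0 \<and> ball (z1 i) (e i) \<subseteq> X i" by metis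
  define A where "A = PiE {..<N} (\<lambda>i. {z1 i - e i <..< z1 i + e i})"
  have AU: "z \<in> U" if "z \<in> A" for z
  proof -
    define z' where "z' = (\<lambda>i. if i < N then z i else z1 i)"
    have "z' \<in> PiE UNIV X"
    proof -
      have "z i \<in> X i" if "i < N" for i
      proof -
        have "z1 i - e i < z i \<and> z i < z1 i + e i" using \<open>z \<in> A\<close> that unfolding A_def
          by (auto simp: PiE_iff)
        then have "z i \<in> ball (z1 i) (e i)" by (auto simp: dist_real_def ball_def abs_less_iff)
        then show ?thesis using e that by blast
      qed
      then show ?thesis using X(1) unfolding z'_def by (auto simp: PiE_iff)
    qed
    then have "z' \<in> U" using X(3) by auto
    moreover have "g z' = g z" unfolding g_def z'_def by (rule arg_cong[where f=p], rule sp_dep) (auto simp: N_def)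
    moreover have "(\<Sum>i<N. z' i) = (\<Sum>i<N. z i)" unfolding z'_def by simp
    ultimately show ?thesis unfolding U_def z'_def by auto
  qed
  define F where "F = (\<lambda>z. p (simplex_pt d z) * p (simplex_pt d z) * dir_weight d \<alpha> z)"
  have Fpos: "F z > 0" if "z \<in> U" for z
  proof -
    have "dir_weight d \<alpha> z > 0" using that weight_pos[OF d1, of z \<alpha>] unfolding U_def N_def by auto
    moreover have "g z \<noteq> 0" using that unfolding U_def by auto
    ultimately show ?thesis unfolding F_def g_def by (simp add: zero_less_mult_iff) linarith
  qed
  have Vpp: "Vf d (\<lambda>x. p x * p x)" using pdl_Vf[OF pp] by (intro Vf_mult)
  have Fint: "integrable (leb_coords d) F"
    using Vf_integrable[OF apos d1 Vpp] unfolding F_def by simp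
  have Fnn: "F z \<ge> 0" for z unfolding F_def using weight_nonneg[of d \<alpha> z] by simp
  have "(\<integral>z. F z \<partial>leb_coords d) = 0"
    using E0 Dm_pos[OF apos d1, of "\<lambda>_. 0"] unfolding E_eq[OF apos d1] F_def by simp
  then have AE0: "AE z in leb_coords d. F z = 0"
    using integral_nonneg_eq_0_iff_AE[OF Fint] Fnn by auto
  have Fm: "F \<in> borel_measurable (leb_coords d)" using Fint by (rule borel_measurable_integrable)
  have Nsets: "{z \<in> space (leb_coords d). F z \<noteq> 0} \<in> sets (leb_coords d)" using Fm by measurable
  have N0: "emeasure (leb_coords d) {z \<in> space (leb_coords d). F z \<noteq> 0} = 0"
    using AE0 AE_iff_measurable[OF Nsets, of "\<lambda>z. F z = 0"] by auto
  have Asets: "A \<in> sets (leb_coords d)" unfolding A_def leb_coords_def N_def by (intro sets_PiM_I_finite) auto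
  have Asub: "A \<subseteq> {z \<in> space (leb_coords d). F z \<noteq> 0}"
  proof
    fix z assume "z \<in> A"
    then have "z \<in> space (leb_coords d)" using sets.sets_into_space[OF Asets] by blast
    moreover have "F z \<noteq> 0" using Fpos[OF AU[OF \<open>z \<in> A\<close>]] by simp
    ultimately show "z \<in> {z \<in> space (leb_coords d). F z \<noteq> 0}" by simp
  qed
  have "emeasure (leb_coords d) A \<le> emeasure (leb_coords d) {z \<in> space (leb_coords d). F z \<noteq> 0}"
    by (rule emeasure_mono[OF Asub Nsets])
  then have "emeasure (leb_coords d) A = 0" using N0 by simp
  moreover have "emeasure (leb_coords d) A > 0"
  proof -
    interpret product_sigma_finite "\<lambda>_::nat. lborel::real measure" by standard
    have "emeasure (leb_coords d) A = (\<Prod>i<N. emeasure lborel {z1 i - e i <..< z1 i + e i})"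
      unfolding A_def leb_coords_def N_def by (subst emeasure_PiM) auto
    also have "\<dots> = (\<Prod>i<N. ennreal (2 * e i))"
      using e by (intro prod.cong refl) (auto simp: less_imp_le)
    also have "\<dots> = ennreal (\<Prod>i<N. 2 * e i)" using e by (intro prod_ennreal) (auto simp: less_imp_le)
    also have "\<dots> > 0" using e by (auto intro!: prod_pos)
    finally show ?thesis .
  qed
  ultimately show False by simp
qed

context
  fixes d :: nat and \<alpha> :: "nat \<Rightarrow> real"
  assumes apos: "\<forall>i<d. \<alpha> i > 0" and d2: "d \<ge> 2"
begin

lemma d1: "d \<ge> 1" using d2 by simp

lemma ip_sym: "dir_inner d \<alpha> f g = dir_inner d \<alpha> g f"
  unfolding dir_inner_def by (simp add: mult.commute)

lemma ip_add_left: "Vf d f \<Longrightarrow> Vf d g \<Longrightarrow> Vf d h \<Longrightarrow>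
   dir_inner d \<alpha> (\<lambda>x. f x + g x) h = dir_inner d \<alpha> f h + dir_inner d \<alpha> g h"
  unfolding dir_inner_def distrib_right by (rule E_add[OF apos d1]) (auto intro: Vf_mult)

lemma ip_cmult_left: "dir_inner d \<alpha> (\<lambda>x. c * f x) h = c * dir_inner d \<alpha> f h"
  unfolding dir_inner_def mult.assoc by (rule E_cmult[OF apos d1])

lemma ip_sum_left: "finite I \<Longrightarrow> (\<And>i. i \<in> I \<Longrightarrow> Vf d (f i)) \<Longrightarrow> Vf d h \<Longrightarrow>
   dir_inner d \<alpha> (\<lambda>x. \<Sum>i\<in>I. f i x) h = (\<Sum>i\<in>I. dir_inner d \<alpha> (f i) h)"
  unfolding dir_inner_def sum_distrib_right by (rule E_sum[OF apos d1]) (auto intro: Vf_mult)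

lemma ip_diff_left: "Vf d f \<Longrightarrow> Vf d g \<Longrightarrow> Vf d h \<Longrightarrow>
   dir_inner d \<alpha> (\<lambda>x. f x - g x) h = dir_inner d \<alpha> f h - dir_inner d \<alpha> g h"
  using ip_add_left[of f "\<lambda>x. (-1) * g x" h] ip_cmult_left[of "-1" g h] Vf_cmult[of d g "-1"] by simp

lemma ip_cong_left: "\<forall>x\<in>std_simplex d. f x = f' x \<Longrightarrow> dir_inner d \<alpha> f h = dir_inner d \<alpha> f' h"
  unfolding dir_inner_def by (rule E_cong[OF d1]) auto

lemma ip_self_nonneg: "dir_inner d \<alpha> f f \<ge> 0"
  unfolding dir_inner_def by (rule E_nonneg[OF apos d1]) auto

definition inspan :: "((nat \<Rightarrow> real) \<Rightarrow> real) list \<Rightarrow> ((nat \<Rightarrow> real) \<Rightarrow> real) \<Rightarrow> bool" where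
  "inspan L f \<longleftrightarrow> (\<exists>c. \<forall>x\<in>std_simplex d. f x = (\<Sum>i<length L. c i * (L!i) x))"

definition ortho :: "((nat \<Rightarrow> real) \<Rightarrow> real) list \<Rightarrow> bool" where
  "ortho L \<longleftrightarrow> (\<forall>i<length L. \<forall>j<length L. dir_inner d \<alpha> (L!i) (L!j) = (if i = j then 1 else 0))"

lemma inspan_append: "inspan L f \<Longrightarrow> inspan (L @ M) f"
  unfolding inspan_def
proof (elim exE)
  fix c assume c: "\<forall>x\<in>std_simplex d. f x = (\<Sum>i<length L. c i * (L!i) x)"
  have "(\<Sum>i<length (L@M). (if i < length L then c i else 0) * ((L@M)!i) x) = (\<Sum>i<length L. c i * (L!i) x)" for x
    by (rule sum.mono_neutral_cong_right) (auto simp: nth_append)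
  then show "\<exists>c. \<forall>x\<in>std_simplex d. f x = (\<Sum>i<length (L@M). c i * ((L@M)!i) x)"
    using c by (intro exI[of _ "\<lambda>i. if i < length L then c i else 0"]) auto
qed

lemma inspan_add: "inspan L f \<Longrightarrow> inspan L g \<Longrightarrow> inspan L (\<lambda>x. f x + g x)"
  unfolding inspan_def
proof (elim exE)
  fix c e assume c: "\<forall>x\<in>std_simplex d. f x = (\<Sum>i<length L. c i * (L!i) x)"
    and e: "\<forall>x\<in>std_simplex d. g x = (\<Sum>i<length L. e i * (L!i) x)"
  show "\<exists>c. \<forall>x\<in>std_simplex d. f x + g x = (\<Sum>i<length L. c i * (L!i) x)"
    using c e by (intro exI[of _ "\<lambda>i. c i + e i"]) (simp add: sum.distrib distrib_right)
qed

lemma inspan_cmult: "inspan L f \<Longrightarrow> inspan L (\<lambda>x. a * f x)"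
  unfolding inspan_def
proof (elim exE)
  fix c assume c: "\<forall>x\<in>std_simplex d. f x = (\<Sum>i<length L. c i * (L!i) x)"
  show "\<exists>c. \<forall>x\<in>std_simplex d. a * f x = (\<Sum>i<length L. c i * (L!i) x)"
    using c by (intro exI[of _ "\<lambda>i. a * c i"]) (simp add: sum_distrib_left mult.assoc)
qed

lemma inspan_zero: "inspan L (\<lambda>x. 0)"
  unfolding inspan_def by (intro exI[of _ "\<lambda>i. 0"]) simp

lemma inspan_sum: "finite I \<Longrightarrow> (\<And>i. i \<in> I \<Longrightarrow> inspan L (f i)) \<Longrightarrow> inspan L (\<lambda>x. \<Sum>i\<in>I. f i x)"
  by (induction I rule: finite_induct) (auto intro: inspan_add inspan_zero)

lemma inspan_cong: "inspan L f \<Longrightarrow> \<forall>x\<in>std_simplex d. f x = g x \<Longrightarrow> inspan L g"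
  unfolding inspan_def by auto

lemma coeff_ip:
  assumes "ortho L" "\<forall>f\<in>set L. Vf d f" "\<forall>x\<in>std_simplex d. f x = (\<Sum>i<length L. c i * (L!i) x)" "l < length L"
  shows "dir_inner d \<alpha> f (L!l) = c l"
proof -
  have V: "Vf d (L!i)" if "i < length L" for i using assms(2) that by auto
  have "dir_inner d \<alpha> f (L!l) = dir_inner d \<alpha> (\<lambda>x. \<Sum>i<length L. c i * (L!i) x) (L!l)"
    using assms(3) by (rule ip_cong_left)
  also have "\<dots> = (\<Sum>i<length L. dir_inner d \<alpha> (\<lambda>x. c i * (L!i) x) (L!l))"
    using assms(4) by (intro ip_sum_left) (auto intro: Vf_cmult V)
  also have "\<dots> = (\<Sum>i<length L. c i * (if i = l then 1 else 0))"
    using assms(1,4) unfolding ortho_def by (intro sum.cong refl) (auto simp: ip_cmult_left)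
  also have "\<dots> = c l" using assms(4) by (simp add: if_distrib sum.delta cong: if_cong)
  finally show ?thesis .
qed

lemma GS:
  assumes Pcl: "\<And>f g a b. P f \<Longrightarrow> P g \<Longrightarrow> P (\<lambda>x. a * f x + b * g x)" and P0: "P (\<lambda>x. 0)"
    and PV: "\<And>f. P f \<Longrightarrow> Vf d f"
    and Pdef: "\<And>f. P f \<Longrightarrow> dir_inner d \<alpha> f f = 0 \<Longrightarrow> \<forall>x\<in>std_simplex d. f x = 0"
  shows "set Q \<subseteq> Collect P \<Longrightarrow> ortho Q \<Longrightarrow> set B \<subseteq> Collect P \<Longrightarrow>
    \<exists>R. set R \<subseteq> Collect P \<and> ortho (Q @ R) \<and> (\<forall>b\<in>set B. inspan (Q @ R) b)"
proof (induction B arbitrary: Q)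
  case Nil
  then show ?case by (intro exI[of _ "[]"]) auto
next
  case (Cons b B)
  have Psum: "P (\<lambda>x. \<Sum>i\<in>I. a i * f i x)" if "finite I" "\<And>i. i \<in> I \<Longrightarrow> P (f i)" for I a f
    using that
  proof (induction I rule: finite_induct)
    case empty then show ?case using P0 by simp
  next
    case (insert i I)
    then have "P (\<lambda>x. a i * f i x + 1 * (\<Sum>i\<in>I. a i * f i x))" by (intro Pcl) auto
    then show ?case using insert by simp
  qed
  have Pb: "P b" using Cons.prems by auto
  have PQ: "P (Q!i)" if "i < length Q" for i using Cons.prems(1) nth_mem[OF that] by auto
  have VQ: "\<forall>f\<in>set Q. Vf d f" using Cons.prems PV by auto
  define c where "c = (\<lambda>i. dir_inner d \<alpha> b (Q!i))"
  define pr where "pr = (\<lambda>x. \<Sum>i<length Q. c i * (Q!i) x)"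
  define r where "r = (\<lambda>x. b x - pr x)"
  have Ppr: "P pr" unfolding pr_def by (rule Psum) (auto intro: PQ)
  have Pr: "P r"
  proof -
    have "P (\<lambda>x. 1 * b x + (-1) * pr x)" using Pb Ppr by (intro Pcl)
    then show ?thesis unfolding r_def by simp
  qed
  have Vr: "Vf d r" using PV[OF Pr] .
  have ipr: "dir_inner d \<alpha> r (Q!l) = 0" if "l < length Q" for l
  proof -
    have "dir_inner d \<alpha> pr (Q!l) = c l"
      using coeff_ip[OF Cons.prems(2) VQ _ that, of pr c] unfolding pr_def by simp
    moreover have "dir_inner d \<alpha> r (Q!l) = dir_inner d \<alpha> b (Q!l) - dir_inner d \<alpha> pr (Q!l)"
      unfolding r_def using PV[OF Pb] PV[OF Ppr] PV[OF PQ[OF that]] by (rule ip_diff_left)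
    ultimately show ?thesis unfolding c_def by simp
  qed
  show ?case
  proof (cases "dir_inner d \<alpha> r r = 0")
    case True
    then have r0: "\<forall>x\<in>std_simplex d. r x = 0" using Pdef[OF Pr] by auto
    have "inspan Q b" unfolding inspan_def
      using r0 unfolding r_def pr_def by (intro exI[of _ c]) auto
    obtain R where R: "set R \<subseteq> Collect P" "ortho (Q @ R)" "\<forall>b\<in>set B. inspan (Q @ R) b"
      using Cons.IH[OF Cons.prems(1,2)] Cons.prems(3) by auto
    then show ?thesis using inspan_append[OF \<open>inspan Q b\<close>, of R] by (intro exI[of _ R]) auto
  next
    case False
    then have rpos: "dir_inner d \<alpha> r r > 0" using ip_self_nonneg[of r] by linarith
    define s where "s = sqrt (dir_inner d \<alpha> r r)"
    have s: "s > 0" "s * s = dir_inner d \<alpha> r r" unfolding s_def using rpos by auto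
    define e where "e = (\<lambda>x. (1/s) * r x)"
    have Pe: "P e"
    proof -
      have "P (\<lambda>x. (1/s) * r x + 0 * r x)" using Pr by (intro Pcl)
      then show ?thesis unfolding e_def by simp
    qed
    have ee: "dir_inner d \<alpha> e e = 1"
    proof -
      have "dir_inner d \<alpha> e e = (1/s) * dir_inner d \<alpha> r e" unfolding e_def by (rule ip_cmult_left)
      also have "dir_inner d \<alpha> r e = dir_inner d \<alpha> e r" by (rule ip_sym)
      also have "\<dots> = (1/s) * dir_inner d \<alpha> r r" unfolding e_def by (rule ip_cmult_left)
      finally show ?thesis using s rpos by (simp add: field_simps)
    qed
    have eQ: "dir_inner d \<alpha> e (Q!l) = 0" if "l < length Q" for l
      unfolding e_def ip_cmult_left using ipr[OF that] by simp
    have Qe: "dir_inner d \<alpha> (Q!l) e = 0" if "l < length Q" for l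
      using eQ[OF that] ip_sym by metis
    have orthoQe: "ortho (Q @ [e])"
      unfolding ortho_def
    proof (intro allI impI)
      fix i j assume i: "i < length (Q @ [e])" and j: "j < length (Q @ [e])"
      show "dir_inner d \<alpha> ((Q @ [e]) ! i) ((Q @ [e]) ! j) = (if i = j then 1 else 0)"
      proof (cases "i < length Q"; cases "j < length Q")
        assume "i < length Q" "j < length Q"
        then show ?thesis using Cons.prems(2) unfolding ortho_def by (simp add: nth_append)
      next
        assume "i < length Q" "\<not> j < length Q"
        then have "j = length Q" using j by simp
        then show ?thesis using Qe[OF \<open>i < length Q\<close>] \<open>i < length Q\<close> by (simp add: nth_append)
      next
        assume "\<not> i < length Q" "j < length Q"
        then have "i = length Q" using i by simp
        then show ?thesis using eQ[OF \<open>j < length Q\<close>] \<open>j < length Q\<close> by (simp add: nth_append)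
      next
        assume "\<not> i < length Q" "\<not> j < length Q"
        then have "i = length Q" "j = length Q" using i j by auto
        then show ?thesis using ee by (simp add: nth_append)
      qed
    qed
    have "inspan (Q @ [e]) b" unfolding inspan_def
    proof (intro exI[of _ "\<lambda>i. if i < length Q then c i else s"] ballI)
      fix x
      have "(\<Sum>i<length (Q @ [e]). (if i < length Q then c i else s) * ((Q @ [e]) ! i) x)
          = (\<Sum>i<length Q. c i * (Q!i) x) + s * e x"
        by (simp add: nth_append)
      also have "\<dots> = b x" unfolding e_def r_def pr_def using s by simp
      finally show "b x = (\<Sum>i<length (Q @ [e]). (if i < length Q then c i else s) * ((Q @ [e]) ! i) x)" by simp
    qed
    obtain R where R: "set R \<subseteq> Collect P" "ortho ((Q @ [e]) @ R)" "\<forall>b\<in>set B. inspan ((Q @ [e]) @ R) b"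
      using Cons.IH[of "Q @ [e]"] Cons.prems Pe orthoQe by auto
    show ?thesis
      using R Pe inspan_append[OF \<open>inspan (Q @ [e]) b\<close>, of R]
      by (intro exI[of _ "e # R"]) auto
  qed
qed

lemma sum_split_add: "(\<Sum>i<(a::nat)+b. f i) = (\<Sum>i<a. f i) + (\<Sum>i<b. f (a+i)::real)"
  by (induction b) auto

lemma ip_lincomb:
  assumes "\<forall>f\<in>set L. Vf d f" "Vf d h" "\<forall>x\<in>std_simplex d. f x = (\<Sum>i<length L. c i * (L!i) x)"
  shows "dir_inner d \<alpha> f h = (\<Sum>i<length L. c i * dir_inner d \<alpha> (L!i) h)"
proof -
  have "dir_inner d \<alpha> f h = dir_inner d \<alpha> (\<lambda>x. \<Sum>i<length L. c i * (L!i) x) h"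
    using assms(3) by (rule ip_cong_left)
  also have "\<dots> = (\<Sum>i<length L. dir_inner d \<alpha> (\<lambda>x. c i * (L!i) x) h)"
    using assms(1,2) by (intro ip_sum_left) (auto intro: Vf_cmult)
  also have "\<dots> = (\<Sum>i<length L. c i * dir_inner d \<alpha> (L!i) h)" by (simp add: ip_cmult_left)
  finally show ?thesis .
qed

lemma inspan_poly:
  assumes "poly_deg_le d m q" "\<And>k. k \<in> exps d m \<Longrightarrow> inspan L (xmono d k)"
  shows "inspan L q"
proof -
  obtain c where q: "q = (\<lambda>x. \<Sum>k\<in>exps d m. c k * xmono d k x)" using assms(1) unfolding pdl_iff by auto
  show ?thesis unfolding q by (intro inspan_sum inspan_cmult assms(2) finite_exps)
qed

lemma onb_exists: "\<exists>Ps. is_onb d \<alpha> n Ps"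
proof -
  have Pdef: "\<forall>x\<in>std_simplex d. f x = 0" if "poly_deg_le d m f" "dir_inner d \<alpha> f f = 0" for f m
    using definite[OF apos d2 that(1)] that(2) unfolding dir_inner_def by auto
  have Pcl: "poly_deg_le d m (\<lambda>x. a * f x + b * g x)" if "poly_deg_le d m f" "poly_deg_le d m g" for f g a b m
    using that by (intro pdl_add pdl_cmult)
  obtain R0 where R0: "ortho R0" "set R0 \<subseteq> Collect (poly_deg_le d n)"
    "\<forall>r\<in>set R0. \<exists>m<n. poly_deg_le d m r"
    "\<forall>k\<in>exps d n. (\<Sum>i<d. k i) < n \<longrightarrow> inspan R0 (xmono d k)"
  proof (cases n)
    case 0
    then show ?thesis using that[of "[]"] unfolding ortho_def by auto
  next
    case (Suc m)
    obtain Ls where Ls: "set Ls = xmono d ` {k\<in>exps d n. (\<Sum>i<d. k i) < n}"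
      using finite_list[of "xmono d ` {k\<in>exps d n. (\<Sum>i<d. k i) < n}"] finite_exps by auto
    have LsP: "set Ls \<subseteq> Collect (poly_deg_le d m)"
      unfolding Ls using Suc by (auto intro!: pdl_xmono simp: exps_def)
    obtain R where R: "set R \<subseteq> Collect (poly_deg_le d m)" "ortho ([] @ R)" "\<forall>b\<in>set Ls. inspan ([] @ R) b"
    proof -
      have "\<exists>R. set R \<subseteq> Collect (poly_deg_le d m) \<and> ortho ([] @ R) \<and> (\<forall>b\<in>set Ls. inspan ([] @ R) b)"
      proof (rule GS[where P="poly_deg_le d m"])
        show "poly_deg_le d m (\<lambda>x. a * f x + b * g x)" if "poly_deg_le d m f" "poly_deg_le d m g" for f g a b
          using Pcl that .
        show "\<forall>x\<in>std_simplex d. f x = 0" if "poly_deg_le d m f" "dir_inner d \<alpha> f f = 0" for f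
          using Pdef that .
      qed (use pdl_zero pdl_Vf LsP in \<open>auto simp: ortho_def\<close>)
      then show ?thesis using that by blast
    qed
    show ?thesis
    proof (rule that[of R])
      show "ortho R" using R by simp
      show "set R \<subseteq> Collect (poly_deg_le d n)" using R(1) pdl_le[of m n] Suc by auto
      show "\<forall>r\<in>set R. \<exists>m<n. poly_deg_le d m r" using R(1) Suc by auto
      show "\<forall>k\<in>exps d n. (\<Sum>i<d. k i) < n \<longrightarrow> inspan R (xmono d k)" using R(3) unfolding Ls by auto
    qed
  qed
  obtain Bs where Bs: "set Bs = xmono d ` exps d n"
    using finite_list[of "xmono d ` exps d n"] finite_exps by auto
  have BsP: "set Bs \<subseteq> Collect (poly_deg_le d n)" unfolding Bs by (auto intro!: pdl_xmono)
  obtain R1 where R1: "set R1 \<subseteq> Collect (poly_deg_le d n)" "ortho (R0 @ R1)" "\<forall>b\<in>set Bs. inspan (R0 @ R1) b"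
  proof -
    have "\<exists>R. set R \<subseteq> Collect (poly_deg_le d n) \<and> ortho (R0 @ R) \<and> (\<forall>b\<in>set Bs. inspan (R0 @ R) b)"
    proof (rule GS[where P="poly_deg_le d n"])
      show "poly_deg_le d n (\<lambda>x. a * f x + b * g x)" if "poly_deg_le d n f" "poly_deg_le d n g" for f g a b
        using Pcl that .
      show "\<forall>x\<in>std_simplex d. f x = 0" if "poly_deg_le d n f" "dir_inner d \<alpha> f f = 0" for f
        using Pdef that .
    qed (use pdl_zero pdl_Vf R0(1,2) BsP in auto)
    then show ?thesis using that by blast
  qed
  have VR0: "\<forall>f\<in>set R0. Vf d f" using R0(2) pdl_Vf by auto
  have VR1: "\<forall>f\<in>set R1. Vf d f" using R1(1) pdl_Vf by auto
  have VR: "\<forall>f\<in>set (R0 @ R1). Vf d f" using VR0 VR1 by auto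
  have cross: "dir_inner d \<alpha> (R0!i) (R1!l) = 0" if "i < length R0" "l < length R1" for i l
  proof -
    have o: "\<forall>i<length (R0@R1). \<forall>j<length (R0@R1). dir_inner d \<alpha> ((R0@R1)!i) ((R0@R1)!j) = (if i = j then 1 else 0)"
      using R1(2) unfolding ortho_def .
    have "dir_inner d \<alpha> ((R0@R1)!i) ((R0@R1)!(length R0 + l)) = (if i = length R0 + l then 1 else 0)"
      using o[rule_format, of i "length R0 + l"] that by simp
    then show ?thesis using that by (simp add: nth_append)
  qed
  have orthoR1: "ortho R1"
    unfolding ortho_def
  proof (intro allI impI)
    fix i j assume "i < length R1" "j < length R1"
    moreover have o: "\<forall>i<length (R0@R1). \<forall>j<length (R0@R1). dir_inner d \<alpha> ((R0@R1)!i) ((R0@R1)!j) = (if i = j then 1 else 0)"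
      using R1(2) unfolding ortho_def .
    ultimately have "dir_inner d \<alpha> ((R0@R1)!(length R0 + i)) ((R0@R1)!(length R0 + j)) = (if length R0 + i = length R0 + j then 1 else 0)"
      using o[rule_format, of "length R0 + i" "length R0 + j"] by simp
    then show "dir_inner d \<alpha> (R1!i) (R1!j) = (if i = j then 1 else 0)" by (simp add: nth_append)
  qed
  show ?thesis
  proof (intro exI[of _ R1])
    show "is_onb d \<alpha> n R1"
      unfolding is_onb_def
    proof (intro conjI)
      show "set R1 \<subseteq> orth_space d \<alpha> n"
      proof
        fix r assume r: "r \<in> set R1"
        then obtain l where l: "l < length R1" "r = R1!l" by (metis in_set_conv_nth)
        have "dir_inner d \<alpha> r q = 0" if "m < n" "poly_deg_le d m q" for m q
        proof -
          have "inspan R0 q"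
          proof (rule inspan_poly[OF that(2)])
            fix k assume "k \<in> exps d m"
            then show "inspan R0 (xmono d k)" using R0(4) that(1) unfolding exps_def by auto
          qed
          then obtain c where c: "\<forall>x\<in>std_simplex d. q x = (\<Sum>i<length R0. c i * (R0!i) x)"
            unfolding inspan_def by auto
          have "dir_inner d \<alpha> r q = dir_inner d \<alpha> q r" by (rule ip_sym)
          also have "\<dots> = (\<Sum>i<length R0. c i * dir_inner d \<alpha> (R0!i) r)"
            using VR0 VR1 r c by (intro ip_lincomb) auto
          also have "\<dots> = 0" using cross l by simp
          finally show ?thesis .
        qed
        then show "r \<in> orth_space d \<alpha> n" unfolding orth_space_def using R1(1) r by auto
      qed
      show "\<forall>i<length R1. \<forall>j<length R1. dir_inner d \<alpha> (R1 ! i) (R1 ! j) = (if i = j then 1 else 0)"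
        using orthoR1 unfolding ortho_def .
      show "\<forall>p\<in>orth_space d \<alpha> n. \<exists>c. \<forall>x\<in>std_simplex d. p x = (\<Sum>i<length R1. c i * (R1 ! i) x)"
      proof
        fix p assume p: "p \<in> orth_space d \<alpha> n"
        have "inspan (R0 @ R1) p"
        proof (rule inspan_poly)
          show "poly_deg_le d n p" using p unfolding orth_space_def by auto
          fix k assume "k \<in> exps d n"
          then show "inspan (R0 @ R1) (xmono d k)" using R1(3) Bs by auto
        qed
        then obtain c where c: "\<forall>x\<in>std_simplex d. p x = (\<Sum>i<length (R0 @ R1). c i * ((R0 @ R1)!i) x)"
          unfolding inspan_def by auto
        have c0: "c i = 0" if iR: "i < length R0" for i
        proof -
          have "dir_inner d \<alpha> p ((R0 @ R1)!i) = c i"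
            using coeff_ip[OF R1(2) VR c] that by simp
          moreover obtain m where "m < n" "poly_deg_le d m (R0!i)" using R0(3) nth_mem[OF iR] by blast
          then have "dir_inner d \<alpha> p (R0!i) = 0" using p unfolding orth_space_def by auto
          ultimately show ?thesis using that by (simp add: nth_append)
        qed
        show "\<exists>c. \<forall>x\<in>std_simplex d. p x = (\<Sum>i<length R1. c i * (R1 ! i) x)"
        proof (intro exI[of _ "\<lambda>i. c (length R0 + i)"] ballI)
          fix x assume x: "x \<in> std_simplex d"
          have "p x = (\<Sum>i<length R0 + length R1. c i * ((R0 @ R1)!i) x)" using c x by simp
          also have "\<dots> = (\<Sum>i<length R1. c (length R0 + i) * (R1 ! i) x)"
            unfolding sum_split_add using c0 by (simp add: nth_append)
          finally show "p x = (\<Sum>i<length R1. c (length R0 + i) * (R1 ! i) x)" .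
        qed
      qed
    qed
  qed
qed

definition "onbP n = (SOME Ps. is_onb d \<alpha> n Ps)"

lemma onbP: "is_onb d \<alpha> n (onbP n)"
  unfolding onbP_def using onb_exists by (rule someI_ex)

lemma onbP_ortho: "ortho (onbP n)"
  using onbP[of n] unfolding is_onb_def ortho_def by auto

lemma onbP_V: "\<forall>f\<in>set (onbP n). Vf d f"
  using onbP[of n] unfolding is_onb_def orth_space_def by (auto intro: pdl_Vf)

lemma onbP_V': "i < length (onbP n) \<Longrightarrow> Vf d (onbP n ! i)"
  using onbP_V nth_mem by blast

lemma onbP_orth: "f \<in> set (onbP n) \<Longrightarrow> f \<in> orth_space d \<alpha> n"
  using onbP[of n] unfolding is_onb_def by auto

lemma jk_eq: "jacobi_kernel d \<alpha> n x y = (\<Sum>i<length (onbP n). (onbP n ! i) x * (onbP n ! i) y)"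
  unfolding jacobi_kernel_def onbP_def[symmetric] Let_def
  by (simp add: sum_list_sum_nth atLeast0LessThan)

lemma kern_lincomb: "jacobi_kernel d \<alpha> n x x0 = (\<Sum>i<length (onbP n). (onbP n ! i) x0 * (onbP n ! i) x)"
  unfolding jk_eq by (simp add: mult.commute)

lemma Vf_kern: "Vf d (\<lambda>x. jacobi_kernel d \<alpha> n x x0)"
  unfolding kern_lincomb by (intro Vf_sum Vf_cmult onbP_V') auto

lemma kern_orth:
  assumes "m < n" "poly_deg_le d m q"
  shows "dir_inner d \<alpha> (\<lambda>x. jacobi_kernel d \<alpha> n x x0) q = 0"
proof -
  have "dir_inner d \<alpha> (\<lambda>x. jacobi_kernel d \<alpha> n x x0) q = (\<Sum>i<length (onbP n). (onbP n ! i) x0 * dir_inner d \<alpha> (onbP n ! i) q)"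
    using onbP_V pdl_Vf[OF assms(2)] by (intro ip_lincomb) (auto simp: kern_lincomb)
  also have "\<dots> = 0"
  proof (intro sum.neutral ballI)
    fix i assume "i \<in> {..<length (onbP n)}"
    then have "onbP n ! i \<in> orth_space d \<alpha> n" using onbP_orth nth_mem by auto
    then show "(onbP n ! i) x0 * dir_inner d \<alpha> (onbP n ! i) q = 0" using assms unfolding orth_space_def by auto
  qed
  finally show ?thesis .
qed

lemma kern_unique:
  assumes "q \<in> orth_space d \<alpha> n" "\<And>P. P \<in> orth_space d \<alpha> n \<Longrightarrow> dir_inner d \<alpha> P q = P x0"
    "y \<in> std_simplex d"
  shows "jacobi_kernel d \<alpha> n y x0 = q y"
proof -
  let ?P = "onbP n"
  obtain c where c: "\<forall>x\<in>std_simplex d. q x = (\<Sum>i<length ?P. c i * (?P ! i) x)"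
    using onbP[of n] assms unfolding is_onb_def by blast
  have "c i = (?P ! i) x0" if "i < length ?P" for i
  proof -
    have "c i = dir_inner d \<alpha> q (?P ! i)" using coeff_ip[OF onbP_ortho onbP_V c that] by simp
    also have "\<dots> = dir_inner d \<alpha> (?P ! i) q" by (rule ip_sym)
    also have "\<dots> = (?P ! i) x0" using assms(2) onbP_orth nth_mem[OF that] by blast
    finally show ?thesis .
  qed
  then show ?thesis using c assms(3) unfolding jk_eq by (simp add: mult.commute)
qed

lemma reproducing:
  assumes "h \<in> orth_space d \<alpha> n" "x0 \<in> std_simplex d"
  shows "dir_inner d \<alpha> h (\<lambda>x. jacobi_kernel d \<alpha> n x x0) = h x0"
proof -
  let ?P = "onbP n"
  obtain c where c: "\<forall>x\<in>std_simplex d. h x = (\<Sum>i<length ?P. c i * (?P ! i) x)"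
    using onbP[of n] assms unfolding is_onb_def by blast
  have Vh: "Vf d h" using assms unfolding orth_space_def by (auto intro: pdl_Vf)
  have "dir_inner d \<alpha> h (\<lambda>x. jacobi_kernel d \<alpha> n x x0) = dir_inner d \<alpha> (\<lambda>x. jacobi_kernel d \<alpha> n x x0) h"
    by (rule ip_sym)
  also have "\<dots> = (\<Sum>i<length ?P. (?P ! i) x0 * dir_inner d \<alpha> (?P ! i) h)"
    using onbP_V Vh by (intro ip_lincomb) (auto simp: kern_lincomb)
  also have "\<dots> = (\<Sum>i<length ?P. (?P ! i) x0 * c i)"
  proof (intro sum.cong refl)
    fix i assume "i \<in> {..<length ?P}"
    then have "dir_inner d \<alpha> h (?P ! i) = c i" using coeff_ip[OF onbP_ortho onbP_V c] by auto
    then show "(?P ! i) x0 * dir_inner d \<alpha> (?P ! i) h = (?P ! i) x0 * c i" by (simp add: ip_sym)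
  qed
  also have "\<dots> = h x0" using c assms(2) by (simp add: mult.commute)
  finally show ?thesis .
qed

end

definition e2 :: "nat \<Rightarrow> nat \<Rightarrow> nat \<Rightarrow> nat" where
  "e2 p K = (\<lambda>i. if i = 0 then p else if i = 1 then K else 0)"

lemma xmono_e2: "xmono 2 (e2 p K) x = x 0 ^ p * x 1 ^ K"
  unfolding xmono_def e2_def by (simp add: numeral_2_eq_2)

lemma xmono_shift: "j < d \<Longrightarrow> xmono d (\<lambda>i. if i = j then k i + m else k i) y = y j ^ m * xmono d k y"
proof -
  assume j: "j < d"
  have "xmono d (\<lambda>i. if i = j then k i + m else k i) y = y j ^ (k j + m) * (\<Prod>i\<in>{..<d}-{j}. y i ^ k i)"
    unfolding xmono_def using j by (subst prod.remove[of _ j]) (auto intro!: prod.cong)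
  moreover have "xmono d k y = y j ^ k j * (\<Prod>i\<in>{..<d}-{j}. y i ^ k i)"
    unfolding xmono_def using j by (subst prod.remove[of _ j]) auto
  ultimately show ?thesis by (simp add: power_add algebra_simps)
qed

context
  fixes d :: nat and \<alpha> :: "nat \<Rightarrow> real" and j :: nat
  assumes apos: "\<forall>i<d. \<alpha> i > 0" and d2: "d \<ge> 2" and jd: "j < d"
begin

definition "aB = \<alpha> j"
definition "bB = (\<Sum>i<d. \<alpha> i) - \<alpha> j"
definition "\<alpha>B = (\<lambda>i::nat. if i = 0 then \<alpha> j else (\<Sum>i<d. \<alpha> i) - \<alpha> j)"
definition "Rj = {..<d} - {j}"
definition "Kk k = (\<Sum>i\<in>Rj. k i)"
definition "Cc k = (\<Prod>i\<in>Rj. Gamma (\<alpha> i + real (k i)) / Gamma (\<alpha> i)) * Gamma bB / Gamma (bB + real (Kk k))"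

lemma d1': "d \<ge> 1" using d2 by simp

lemma bB_eq: "bB = (\<Sum>i\<in>Rj. \<alpha> i)"
  unfolding bB_def Rj_def using jd by (simp add: sum_diff1)

lemma bB_pos: "bB > 0"
proof -
  define i where "i = (if j = 0 then 1 else 0::nat)"
  have i: "i < d" "i \<noteq> j" using d2 unfolding i_def by auto
  then have "i \<in> Rj" unfolding Rj_def by auto
  then have "\<alpha> i \<le> (\<Sum>i\<in>Rj. \<alpha> i)" using apos unfolding Rj_def by (intro member_le_sum) (auto simp: less_imp_le)
  moreover have "\<alpha> i > 0" using apos i by auto
  ultimately show ?thesis unfolding bB_eq by simp
qed

lemma aB_pos: "aB > 0" unfolding aB_def using apos jd by auto

lemma \<alpha>B_pos: "\<forall>i<2. \<alpha>B i > 0"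
  using aB_pos bB_pos unfolding \<alpha>B_def aB_def bB_def by auto

lemma sum_k_split: "(\<Sum>i<d. k i) = k j + Kk k"
  unfolding Kk_def Rj_def using jd by (subst sum.remove[of _ j]) auto

lemma Gamma_ne: "x > 0 \<Longrightarrow> Gamma (x::real) \<noteq> 0"
proof -
  assume "x > 0"
  then have "Gamma x > 0" by (rule Gamma_real_pos)
  then show ?thesis by simp
qed

lemma Dm_ratio:
  "Dm d \<alpha> (\<lambda>i. if i = j then k i + m else k i) / Dm d \<alpha> (\<lambda>_. 0)
   = Cc k * (Dm 2 \<alpha>B (e2 (k j + m) (Kk k)) / Dm 2 \<alpha>B (\<lambda>_. 0))"
proof -
  define A where "A = (\<Sum>i<d. \<alpha> i)"
  define PR where "PR = (\<Prod>i\<in>Rj. Gamma (\<alpha> i + real (k i)))"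
  define PR0 where "PR0 = (\<Prod>i\<in>Rj. Gamma (\<alpha> i))"
  have fin: "finite Rj" "j \<notin> Rj" unfolding Rj_def by auto
  have ins: "{..<d} = insert j Rj" unfolding Rj_def using jd by auto
  have P1: "(\<Prod>i<d. Gamma (\<alpha> i + real (if i = j then k i + m else k i))) = Gamma (aB + real (k j + m)) * PR"
    unfolding ins PR_def aB_def using fin by (auto intro!: prod.cong)
  have P0: "(\<Prod>i<d. Gamma (\<alpha> i + real 0)) = Gamma aB * PR0"
    unfolding ins PR0_def aB_def using fin by auto
  have S1: "(\<Sum>i<d. (\<alpha> i + real (if i = j then k i + m else k i))) = A + real (k j + m) + real (Kk k)"
  proof -
    have "(\<Sum>i<d. (\<alpha> i + real (if i = j then k i + m else k i))) = A + (\<Sum>i<d. real (if i = j then k i + m else k i))"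
      unfolding A_def by (simp add: sum.distrib)
    also have "(\<Sum>i<d. real (if i = j then k i + m else k i)) = real (k j + m) + (\<Sum>i\<in>Rj. real (k i))"
      unfolding ins using fin by (auto intro!: sum.cong)
    finally show ?thesis unfolding Kk_def by simp
  qed
  have S0: "(\<Sum>i<d. (\<alpha> i + real 0)) = A" unfolding A_def by simp
  have AB: "A = aB + bB" unfolding A_def aB_def bB_def by simp
  have PRdiv: "(\<Prod>i\<in>Rj. Gamma (\<alpha> i + real (k i)) / Gamma (\<alpha> i)) = PR / PR0"
    unfolding PR_def PR0_def by (rule prod_dividef)
  have PR0nz: "PR0 \<noteq> 0" unfolding PR0_def using apos fin unfolding Rj_def by (auto intro!: Gamma_ne)
  have PRnz: "PR \<noteq> 0" unfolding PR_def using apos fin unfolding Rj_def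
    by (auto intro!: Gamma_ne add_pos_nonneg)
  have g1: "Gamma aB \<noteq> 0" "Gamma bB \<noteq> 0" "Gamma (aB + bB) \<noteq> 0"
    using aB_pos bB_pos by (auto intro!: Gamma_ne)
  have g2: "Gamma (aB + real (k j + m)) \<noteq> 0" "Gamma (bB + real (Kk k)) \<noteq> 0"
    "Gamma (aB + bB + real (k j + m) + real (Kk k)) \<noteq> 0"
    using aB_pos bB_pos by (auto intro!: Gamma_ne add_pos_nonneg)
  have DB1: "Dm 2 \<alpha>B (e2 (k j + m) (Kk k)) = Gamma (aB + real (k j + m)) * Gamma (bB + real (Kk k)) / Gamma (aB + bB + real (k j + m) + real (Kk k))"
    unfolding Dm_def e2_def \<alpha>B_def aB_def bB_def by (simp add: numeral_2_eq_2 algebra_simps)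
  have DB0: "Dm 2 \<alpha>B (\<lambda>_. 0) = Gamma aB * Gamma bB / Gamma (aB + bB)"
    unfolding Dm_def \<alpha>B_def aB_def bB_def by (simp add: numeral_2_eq_2 algebra_simps)
  have D1: "Dm d \<alpha> (\<lambda>i. if i = j then k i + m else k i) = Gamma (aB + real (k j + m)) * PR / Gamma (aB + bB + real (k j + m) + real (Kk k))"
    unfolding Dm_def P1 S1 AB ..
  have D0: "Dm d \<alpha> (\<lambda>_. 0) = Gamma aB * PR0 / Gamma (aB + bB)"
    unfolding Dm_def P0 S0 AB ..
  show ?thesis unfolding D1 D0 DB1 DB0 Cc_def PRdiv
    using PR0nz PRnz g1 g2 by (simp add: field_simps)
qed

lemma E_poly_xmono:
  assumes "\<forall>i<D. \<beta> i > 0" "D \<ge> 1"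
  shows "dir_expect D \<beta> (\<lambda>x. \<Sum>m\<in>M. c m * xmono D (f m) x) = (\<Sum>m\<in>M. c m * (Dm D \<beta> (f m) / Dm D \<beta> (\<lambda>_. 0)))"
proof (cases "finite M")
  case True
  then show ?thesis
    by (subst E_sum[OF assms]) (auto intro!: Vf_cmult Vf_xmono simp: E_cmult[OF assms] E_xmono[OF assms])
next
  case False
  then show ?thesis unfolding dir_expect_def by simp
qed

lemma KI:
  fixes g :: "real poly"
  shows "dir_expect d \<alpha> (\<lambda>y. poly g (y j) * xmono d k y)
       = Cc k * dir_expect 2 \<alpha>B (\<lambda>x. poly g (x 0) * xmono 2 (e2 (k j) (Kk k)) x)"
proof -
  have L: "(\<lambda>y. poly g (y j) * xmono d k y)
      = (\<lambda>y. \<Sum>m\<le>degree g. coeff g m * xmono d (\<lambda>i. if i = j then k i + m else k i) y)"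
    unfolding poly_altdef sum_distrib_right xmono_shift[OF jd] by (simp add: mult.assoc)
  have R: "(\<lambda>x. poly g (x 0) * xmono 2 (e2 (k j) (Kk k)) x)
      = (\<lambda>x. \<Sum>m\<le>degree g. coeff g m * xmono 2 (e2 (k j + m) (Kk k)) x)"
    unfolding poly_altdef sum_distrib_right xmono_e2 by (simp add: power_add algebra_simps)
  show ?thesis
    unfolding L R E_poly_xmono[OF apos d1'] E_poly_xmono[OF \<alpha>B_pos one_le_numeral] Dm_ratio
    by (simp add: sum_distrib_left algebra_simps)
qed

lemma two_ge: "(2::nat) \<ge> 2" by simp
lemma two_ge1: "(2::nat) \<ge> 1" by simp

lemma Vf_univ: "i < D \<Longrightarrow> Vf D (\<lambda>y. poly g (y i))"
  by (rule pdl_Vf[OF pdl_univ[of g "degree g" i D]]) auto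

lemma E_poly_times:
  assumes "p = (\<lambda>x. \<Sum>k\<in>exps d m. c k * xmono d k x)"
  shows "dir_expect d \<alpha> (\<lambda>y. poly g (y j) * p y)
     = (\<Sum>k\<in>exps d m. c k * Cc k * dir_expect 2 \<alpha>B (\<lambda>x. poly g (x 0) * xmono 2 (e2 (k j) (Kk k)) x))"
proof -
  have "dir_expect d \<alpha> (\<lambda>y. poly g (y j) * p y) = dir_expect d \<alpha> (\<lambda>y. \<Sum>k\<in>exps d m. c k * (poly g (y j) * xmono d k y))"
    unfolding assms by (simp add: sum_distrib_left algebra_simps)
  also have "\<dots> = (\<Sum>k\<in>exps d m. c k * dir_expect d \<alpha> (\<lambda>y. poly g (y j) * xmono d k y))"
    by (subst E_sum[OF apos d1']) (auto intro!: Vf_cmult Vf_mult Vf_univ[OF jd] Vf_xmono finite_exps simp: E_cmult[OF apos d1'])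
  also have "\<dots> = (\<Sum>k\<in>exps d m. c k * Cc k * dir_expect 2 \<alpha>B (\<lambda>x. poly g (x 0) * xmono 2 (e2 (k j) (Kk k)) x))"
    unfolding KI by (simp add: mult.assoc)
  finally show ?thesis .
qed

lemma E2_h:
  assumes "h = (\<lambda>x. \<Sum>k\<in>exps d m. c k * Cc k * xmono 2 (e2 (k j) (Kk k)) x)"
  shows "dir_expect 2 \<alpha>B (\<lambda>x. poly g (x 0) * h x)
     = (\<Sum>k\<in>exps d m. c k * Cc k * dir_expect 2 \<alpha>B (\<lambda>x. poly g (x 0) * xmono 2 (e2 (k j) (Kk k)) x))"
proof -
  have "dir_expect 2 \<alpha>B (\<lambda>x. poly g (x 0) * h x) = dir_expect 2 \<alpha>B (\<lambda>x. \<Sum>k\<in>exps d m. (c k * Cc k) * (poly g (x 0) * xmono 2 (e2 (k j) (Kk k)) x))"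
    unfolding assms by (simp add: sum_distrib_left algebra_simps)
  also have "\<dots> = (\<Sum>k\<in>exps d m. (c k * Cc k) * dir_expect 2 \<alpha>B (\<lambda>x. poly g (x 0) * xmono 2 (e2 (k j) (Kk k)) x))"
    by (subst E_sum[OF \<alpha>B_pos two_ge1]) (auto intro!: Vf_cmult Vf_mult Vf_univ[of 0 2] Vf_xmono finite_exps simp: E_cmult[OF \<alpha>B_pos two_ge1])
  finally show ?thesis by simp
qed

lemma e2_exps: "k \<in> exps d m \<Longrightarrow> e2 (k j) (Kk k) \<in> exps 2 m"
  unfolding exps_def e2_def using sum_k_split[of k] by (auto simp: numeral_2_eq_2)

lemma Cc_zero: "Kk k = 0 \<Longrightarrow> Cc k = 1"
proof -
  assume K: "Kk k = 0"
  have fin: "finite Rj" unfolding Rj_def by simp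
  then have z: "\<forall>i\<in>Rj. k i = 0" using K unfolding Kk_def by simp
  have "(\<Prod>i\<in>Rj. Gamma (\<alpha> i + real (k i)) / Gamma (\<alpha> i)) = 1"
    using z apos Gamma_ne unfolding Rj_def by (intro prod.neutral) auto
  then show ?thesis unfolding Cc_def K using Gamma_ne[OF bB_pos] by simp
qed

lemma xmono_basis: "xmono d k (basis_pt j) = (if Kk k = 0 then 1 else 0)"
proof -
  have fin: "finite Rj" "j \<notin> Rj" unfolding Rj_def by auto
  have ins: "{..<d} = insert j Rj" unfolding Rj_def using jd by auto
  have "xmono d k (basis_pt j) = (\<Prod>i\<in>Rj. (0::real) ^ k i)"
    unfolding xmono_def ins basis_pt_def using fin by (auto intro!: prod.cong)
  also have "\<dots> = (if \<forall>i\<in>Rj. k i = 0 then 1 else 0)"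
    using fin by (auto simp: power_0_left prod_zero_iff)
  also have "(\<forall>i\<in>Rj. k i = 0) \<longleftrightarrow> Kk k = 0" unfolding Kk_def using fin by simp
  finally show ?thesis .
qed

lemma pt2_1: "pt2 1 \<in> std_simplex 2" by (rule pt2_simplex) auto

lemma KB_Q: "\<exists>Q. isQ n (\<lambda>x. jacobi_kernel 2 \<alpha>B n x (pt2 1)) Q"
proof -
  let ?P = "onbP 2 \<alpha>B n"
  have "\<forall>i<length ?P. \<exists>Q. isQ n (?P ! i) Q"
  proof (intro allI impI)
    fix i assume "i < length ?P"
    then have "?P ! i \<in> orth_space 2 \<alpha>B n" using onbP_orth[OF \<alpha>B_pos two_ge] nth_mem by blast
    then show "\<exists>Q. isQ n (?P ! i) Q" unfolding orth_space_def by (auto intro: pt2_poly)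
  qed
  then obtain Qf where Qf: "\<forall>i<length ?P. isQ n (?P ! i) (Qf i)" by metis
  have "isQ n (\<lambda>x. \<Sum>i<length ?P. (?P ! i) (pt2 1) * (?P ! i) x) (\<Sum>i<length ?P. smult ((?P ! i) (pt2 1)) (Qf i))"
    using Qf by (intro isQ_sum isQ_cmult) auto
  then show ?thesis unfolding kern_lincomb[OF \<alpha>B_pos two_ge] by blast
qed

lemma main_local:
  assumes y: "y \<in> std_simplex d"
  shows "jacobi_kernel d \<alpha> n y (basis_pt j) = jacobi_kernel 2 \<alpha>B n (pt2 (y j)) (pt2 1)"
proof -
  define KB where "KB = (\<lambda>x. jacobi_kernel 2 \<alpha>B n x (pt2 1))"
  obtain Qp where Qp: "isQ n KB Qp" using KB_Q unfolding KB_def by blast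
  have degQ: "degree Qp \<le> n" and KBQ: "\<And>u. KB (pt2 u) = poly Qp u" using Qp unfolding isQ_def by auto
  have KBS: "KB x = poly Qp (x 0)" if "x \<in> std_simplex 2" for x
    using KBQ[of "x 0"] pt2_in_simplex[OF that] by simp
  define qj where "qj = (\<lambda>y. poly Qp (y j))"
  have qpoly: "poly_deg_le d n qj" unfolding qj_def by (rule pdl_univ[OF degQ jd])
  have E2K: "dir_expect 2 \<alpha>B (\<lambda>x. poly Qp (x 0) * f x) = dir_inner 2 \<alpha>B KB f" for f
    unfolding dir_inner_def using KBS by (intro E_cong) auto
  have qj_orth: "qj \<in> orth_space d \<alpha> n"
    unfolding orth_space_def
  proof (intro CollectI conjI qpoly allI impI)
    fix m q assume m: "m < n" and q: "poly_deg_le d m q"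
    obtain c where c: "q = (\<lambda>x. \<Sum>k\<in>exps d m. c k * xmono d k x)" using q unfolding pdl_iff by auto
    have "dir_inner d \<alpha> qj q = dir_expect d \<alpha> (\<lambda>y. poly Qp (y j) * q y)" unfolding dir_inner_def qj_def ..
    also have "\<dots> = (\<Sum>k\<in>exps d m. c k * Cc k * dir_expect 2 \<alpha>B (\<lambda>x. poly Qp (x 0) * xmono 2 (e2 (k j) (Kk k)) x))"
      by (rule E_poly_times[OF c])
    also have "\<dots> = 0"
    proof (intro sum.neutral ballI)
      fix k assume k: "k \<in> exps d m"
      have "dir_expect 2 \<alpha>B (\<lambda>x. poly Qp (x 0) * xmono 2 (e2 (k j) (Kk k)) x) = dir_inner 2 \<alpha>B KB (xmono 2 (e2 (k j) (Kk k)))"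
        by (rule E2K)
      also have "\<dots> = 0" unfolding KB_def
        by (rule kern_orth[OF \<alpha>B_pos two_ge m pdl_xmono[OF e2_exps[OF k]]])
      finally show "c k * Cc k * dir_expect 2 \<alpha>B (\<lambda>x. poly Qp (x 0) * xmono 2 (e2 (k j) (Kk k)) x) = 0" by simp
    qed
    finally show "dir_inner d \<alpha> qj q = 0" .
  qed
  have repro: "dir_inner d \<alpha> P qj = P (basis_pt j)" if P: "P \<in> orth_space d \<alpha> n" for P
  proof -
    obtain c where c: "P = (\<lambda>x. \<Sum>k\<in>exps d n. c k * xmono d k x)" using P unfolding orth_space_def pdl_iff by auto
    define h where "h = (\<lambda>x. \<Sum>k\<in>exps d n. c k * Cc k * xmono 2 (e2 (k j) (Kk k)) x)"
    have link: "dir_expect 2 \<alpha>B (\<lambda>x. poly g (x 0) * h x) = dir_expect d \<alpha> (\<lambda>y. poly g (y j) * P y)" for g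
      unfolding E2_h[OF h_def] E_poly_times[OF c] ..
    have hpoly: "poly_deg_le 2 n h" unfolding h_def
      by (intro pdl_sum pdl_cmult pdl_xmono e2_exps finite_exps)
    have h_orth: "h \<in> orth_space 2 \<alpha>B n"
      unfolding orth_space_def
    proof (intro CollectI conjI hpoly allI impI)
      fix m r assume m: "m < n" and r: "poly_deg_le 2 m r"
      obtain R where R: "isQ m r R" using pt2_poly[OF r] by blast
      have rS: "r x = poly R (x 0)" if "x \<in> std_simplex 2" for x
        using R pt2_in_simplex[OF that] unfolding isQ_def by metis
      have "dir_inner 2 \<alpha>B h r = dir_expect 2 \<alpha>B (\<lambda>x. poly R (x 0) * h x)"
        unfolding dir_inner_def using rS by (intro E_cong) (auto simp: mult.commute)
      also have "\<dots> = dir_expect d \<alpha> (\<lambda>y. poly R (y j) * P y)" by (rule link)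
      also have "\<dots> = dir_inner d \<alpha> P (\<lambda>y. poly R (y j))" unfolding dir_inner_def by (simp add: mult.commute)
      also have "\<dots> = 0"
      proof -
        have "poly_deg_le d m (\<lambda>y. poly R (y j))" using R jd unfolding isQ_def by (intro pdl_univ) auto
        then show ?thesis using P m unfolding orth_space_def by auto
      qed
      finally show "dir_inner 2 \<alpha>B h r = 0" .
    qed
    have "dir_inner d \<alpha> P qj = dir_expect d \<alpha> (\<lambda>y. poly Qp (y j) * P y)"
      unfolding dir_inner_def qj_def by (simp add: mult.commute)
    also have "\<dots> = dir_expect 2 \<alpha>B (\<lambda>x. poly Qp (x 0) * h x)" by (rule link[symmetric])
    also have "\<dots> = dir_inner 2 \<alpha>B h KB"
      unfolding dir_inner_def using KBS by (intro E_cong) (auto simp: mult.commute)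
    also have "\<dots> = h (pt2 1)" unfolding KB_def by (rule reproducing[OF \<alpha>B_pos two_ge h_orth pt2_1])
    also have "\<dots> = P (basis_pt j)"
      unfolding h_def c
    proof (intro sum.cong refl)
      fix k
      show "c k * Cc k * xmono 2 (e2 (k j) (Kk k)) (pt2 1) = c k * xmono d k (basis_pt j)"
        unfolding xmono_e2 xmono_basis by (cases "Kk k = 0") (auto simp: pt2_def Cc_zero)
    qed
    finally show ?thesis .
  qed
  have "jacobi_kernel d \<alpha> n y (basis_pt j) = qj y"
    by (rule kern_unique[OF apos d2 qj_orth repro y])
  also have "\<dots> = KB (pt2 (y j))" unfolding qj_def KBQ ..
  finally show ?thesis unfolding KB_def .
qed

end

theorem mainTheorem2:
  fixes d :: nat and \<alpha> :: "nat \<Rightarrow> real" and j n :: nat and y :: "nat \<Rightarrow> real"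
  assumes "d \<ge> 2"
    and "\<forall>i<d. \<alpha> i > 0"
    and "j < d"
    and "y \<in> std_simplex d"
  shows "jacobi_kernel d \<alpha> n y (basis_pt j)
           = jacobi_kernel_1 (\<alpha> j) ((\<Sum>i<d. \<alpha> i) - \<alpha> j) n (y j) 1"
  unfolding jacobi_kernel_1_def main_local[OF assms(2,1,3,4)] \<alpha>B_def[OF assms(2,1,3)] ..

end
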